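(* In the binary model, let $0<\tau<1/24$ be a constant and let $\boldsymbol\theta^*=\boldsymbol\theta^*_n\in\mathbb{R}^{2n-1}$ satisfy $\|\boldsymbol\theta^*\|_\infty\le\tau\log n$, and let $A\sim\mathbb{P}_{\boldsymbol\theta^*}$. Then as $n\to\infty$, with probability tending to one the MLE $\hat{\boldsymbol\theta}$ exists and satisfies \[ \|\hat{\boldsymbol\theta}-\boldsymbol\theta^*\|_\infty=O_p\Bigl(\frac{(\log n)^{1/2}e^{8\|\boldsymbol\theta^*\|_\infty}}{n^{1/2}}\Bigr)=o_p(1). \] Moreover, whenever the MLE exists it is unique.
   Context: Binary model: Let $n\ge2$. For $\boldsymbol\theta=(\alpha_1,\dots,\alpha_n,\beta_1,\dots,\beta_{n-1})^\top\in\mathbb{R}^{2n-1}$ set $\beta_n=0$, and let $\mathbb{P}_{\boldsymbol\theta}$ be the law of a random $n\times n$ matrix $A=(a_{i,j})$ with $a_{i,i}=0$ and $a_{i,j}$ ($i\ne j$) mutually independent Bernoulli with $\mathbb{P}(a_{i,j}=1)=e^{\alpha_i+\beta_j}/(1+e^{\alpha_i+\beta_j})$. Out-degrees $d_i=\sum_{j\ne i}a_{i,j}$, in-degrees $b_j=\sum_{i\ne j}a_{i,j}$. The MLE $\hat{\boldsymbol\theta}=(\hat\alpha_1,\dots,\hat\alpha_n,\hat\beta_1,\dots,\hat\beta_{n-1})^\top$ (with $\hat\beta_n=0$) is a solution in $\mathbb{R}^{2n-1}$ of the likelihood equations $d_i=\sum_{k\ne i}\frac{e^{\hat\alpha_i+\hat\beta_k}}{1+e^{\hat\alpha_i+\hat\beta_k}}$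 ($i=1,\dots,n$) and $b_j=\sum_{k\ne j}\frac{e^{\hat\alpha_k+\hat\beta_j}}{1+e^{\hat\alpha_k+\hat\beta_j}}$ ($j=1,\dots,n-1$). *)

theory Defs
  imports Complex_Main
begin

text \<open>Binary (directed beta) model, 0-based indexing.
  A parameter vector theta in R^(2n-1) is a function nat => real, only the
  coordinates k < 2n-1 matter: alpha_i = theta i (i < n),
  beta_j = theta (n + j) (j < n - 1), and beta_(n-1) = 0.\<close>

definition logistic :: "real \<Rightarrow> real" where
  "logistic x = exp x / (1 + exp x)"

definition alpha_of :: "nat \<Rightarrow> (nat \<Rightarrow> real) \<Rightarrow> nat \<Rightarrow> real" where
  "alpha_of n \<theta> i = \<theta> i"

definition beta_of :: "nat \<Rightarrow> (nat \<Rightarrow> real) \<Rightarrow> nat \<Rightarrow> real" where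
  "beta_of n \<theta> j = (if j < n - 1 then \<theta> (n + j) else 0)"

definition edge_prob :: "nat \<Rightarrow> (nat \<Rightarrow> real) \<Rightarrow> nat \<Rightarrow> nat \<Rightarrow> real" where
  "edge_prob n \<theta> i j = logistic (alpha_of n \<theta> i + beta_of n \<theta> j)"

definition supnorm :: "nat \<Rightarrow> (nat \<Rightarrow> real) \<Rightarrow> real" where
  "supnorm n \<theta> = Max ((\<lambda>k. \<bar>\<theta> k\<bar>) ` {..<2*n-1})"

definition offdiag :: "nat \<Rightarrow> (nat \<times> nat) set" where
  "offdiag n = {(i, j). i < n \<and> j < n \<and> i \<noteq> j}"

definition adj_mats :: "nat \<Rightarrow> (nat \<Rightarrow> nat \<Rightarrow> bool) set" where
  "adj_mats n = {A. \<forall>i j. A i j \<longrightarrow> (i, j) \<in> offdiag n}"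

definition mat_prob :: "nat \<Rightarrow> (nat \<Rightarrow> real) \<Rightarrow> (nat \<Rightarrow> nat \<Rightarrow> bool) \<Rightarrow> real" where
  "mat_prob n \<theta> A =
     (\<Prod>(i, j)\<in>offdiag n. if A i j then edge_prob n \<theta> i j else 1 - edge_prob n \<theta> i j)"

definition Prob :: "nat \<Rightarrow> (nat \<Rightarrow> real) \<Rightarrow> (nat \<Rightarrow> nat \<Rightarrow> bool) set \<Rightarrow> real" where
  "Prob n \<theta> E = (\<Sum>A\<in>adj_mats n \<inter> E. mat_prob n \<theta> A)"

definition outdeg :: "nat \<Rightarrow> (nat \<Rightarrow> nat \<Rightarrow> bool) \<Rightarrow> nat \<Rightarrow> nat" where
  "outdeg n A i = card {j. j < n \<and> j \<noteq> i \<and> A i j}"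

definition indeg :: "nat \<Rightarrow> (nat \<Rightarrow> nat \<Rightarrow> bool) \<Rightarrow> nat \<Rightarrow> nat" where
  "indeg n A j = card {i. i < n \<and> i \<noteq> j \<and> A i j}"

text \<open>theta_hat solves the likelihood equations for the observed matrix A.\<close>
definition is_mle :: "nat \<Rightarrow> (nat \<Rightarrow> nat \<Rightarrow> bool) \<Rightarrow> (nat \<Rightarrow> real) \<Rightarrow> bool" where
  "is_mle n A \<theta>h \<longleftrightarrow>
     (\<forall>i<n. real (outdeg n A i) = (\<Sum>k\<in>{k. k < n \<and> k \<noteq> i}. edge_prob n \<theta>h i k)) \<and>
     (\<forall>j<n - 1. real (indeg n A j) = (\<Sum>k\<in>{k. k < n \<and> k \<noteq> j}. edge_prob n \<theta>h k j))"

definition mle_exists :: "nat \<Rightarrow> (nat \<Rightarrow> nat \<Rightarrow> bool) \<Rightarrow> bool" where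
  "mle_exists n A \<longleftrightarrow> (\<exists>\<theta>h. is_mle n A \<theta>h)"

definition supdist :: "nat \<Rightarrow> (nat \<Rightarrow> real) \<Rightarrow> (nat \<Rightarrow> real) \<Rightarrow> real" where
  "supdist n \<theta>1 \<theta>2 = supnorm n (\<lambda>k. \<theta>1 k - \<theta>2 k)"

end

theory Submission
  imports Defs "HOL-Probability.Probability" "HOL-Real_Asymp.Real_Asymp"
begin


abbreviation oth :: "nat \<Rightarrow> nat \<Rightarrow> nat set" where
  "oth n i \<equiv> {k. k < n \<and> k \<noteq> i}"

lemma oth_eq: "oth n i = {..<n} - {i}" by auto

lemma finite_oth[simp]: "finite (oth n i)" by simp

lemma card_oth: "i < n \<Longrightarrow> card (oth n i) = n - 1"
  by (simp add: oth_eq card_Diff_subset)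

lemma offdiag_Sigma: "offdiag n = Sigma {..<n} (oth n)"
  by (auto simp: offdiag_def)

lemma finite_offdiag[simp]: "finite (offdiag n)"
  by (simp add: offdiag_Sigma)

lemma sum_offdiag_rows:
  "(\<Sum>p\<in>offdiag n. h p) = (\<Sum>i<n. \<Sum>j\<in>oth n i. h (i,j))"
  by (simp add: offdiag_Sigma sum.Sigma)

lemma sum_oth_if: "(\<Sum>j\<in>oth n i. g j) = (\<Sum>j<n. if j \<noteq> i then g j else 0)"
proof -
  have "oth n i = {j \<in> {..<n}. j \<noteq> i}" by auto
  then have "(\<Sum>j\<in>oth n i. g j) = (\<Sum>j\<in>{j \<in> {..<n}. j \<noteq> i}. g j)" by simp
  also have "\<dots> = (\<Sum>j<n. if j \<noteq> i then g j else 0)" by (rule sum.inter_filter) simp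
  finally show ?thesis .
qed

lemma sum_offdiag_cols:
  "(\<Sum>p\<in>offdiag n. h p) = (\<Sum>j<n. \<Sum>i\<in>oth n j. h (i,j))"
proof -
  have "(\<Sum>p\<in>offdiag n. h p) = (\<Sum>i<n. \<Sum>j\<in>oth n i. h (i,j))" by (rule sum_offdiag_rows)
  also have "\<dots> = (\<Sum>i<n. \<Sum>j<n. if j \<noteq> i then h (i,j) else 0)"
    by (simp add: sum_oth_if)
  also have "\<dots> = (\<Sum>j<n. \<Sum>i<n. if j \<noteq> i then h (i,j) else 0)"
    by (rule sum.swap)
  also have "\<dots> = (\<Sum>j<n. \<Sum>i\<in>oth n j. h (i,j))"
  proof (rule sum.cong[OF refl])
    fix j
    have "(\<Sum>i<n. if j \<noteq> i then h (i,j) else 0) = (\<Sum>i<n. if i \<noteq> j then h (i,j) else 0)"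
      by (intro sum.cong) auto
    also have "\<dots> = (\<Sum>i\<in>oth n j. h (i,j))" by (rule sum_oth_if[symmetric])
    finally show "(\<Sum>i<n. if j \<noteq> i then h (i,j) else 0) = (\<Sum>i\<in>oth n j. h (i,j))" .
  qed
  finally show ?thesis .
qed

lemma sum_card_oth:
  "real (card {k. k < n \<and> k \<noteq> i \<and> P k}) = (\<Sum>k\<in>oth n i. if P k then 1 else 0)"
proof -
  have "{k. k < n \<and> k \<noteq> i \<and> P k} = {k \<in> oth n i. P k}" by auto
  then show ?thesis by (simp add: sum.If_cases Int_def conj_commute)
qed

section \<open>Logistic function\<close>

lemma onepexp_pos[simp]: "0 < 1 + exp (x::real)"
  by (simp add: add_pos_pos)
lemma onepexp_ne[simp]: "1 + exp (x::real) \<noteq> 0"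
  using onepexp_pos[of x] by linarith

lemma logistic_alt: "logistic (x::real) = 1 / (1 + exp (- x))"
  by (simp add: logistic_def exp_minus field_simps add_pos_pos)

lemma logistic_pos: "0 < logistic x"
  by (simp add: logistic_def add_pos_pos)

lemma logistic_lt1: "logistic x < 1"
  by (simp add: logistic_def add_pos_pos)

lemma logistic_strict_mono: "(x::real) < y \<Longrightarrow> logistic x < logistic y"
  unfolding logistic_alt
  by (intro divide_strict_left_mono) (auto intro!: add_pos_pos mult_pos_pos)

lemma logistic_deriv:
  fixes x :: real shows "(logistic has_real_derivative (exp x / (1 + exp x)^2)) (at x)"
proof -
  have "((\<lambda>x. exp x / (1 + exp x)) has_real_derivative
      ((exp x * (1 + exp x) - exp x * exp x) / ((1 + exp x) * (1 + exp x)))) (at x)"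
    by (auto intro!: derivative_eq_intros)
  moreover have "(exp x * (1 + exp x) - exp x * exp x) / ((1 + exp x) * (1 + exp x)) = exp x / (1 + exp x)^2"
    by (simp add: power2_eq_square algebra_simps)
  ultimately show ?thesis unfolding logistic_def[abs_def] by simp
qed

lemma logistic_deriv_le: "exp (x::real) / (1 + exp x)^2 \<le> 1/4"
proof -
  have "4 * exp x \<le> (1 + exp x)^2"
    using sum_squares_ge_zero[of "1 - exp x" 0]
    by (simp add: power2_eq_square algebra_simps)
  moreover have "(1 + exp x)^2 > 0" by (simp add: add_pos_pos)
  ultimately show ?thesis by (simp add: field_simps)
qed

lemma logistic_deriv_ge:
  fixes x K :: real
  assumes "\<bar>x\<bar> \<le> K"
  shows "exp (- K) / 4 \<le> exp x / (1 + exp x)^2"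
proof (cases "x \<ge> 0")
  case True
  have "(1 + exp x)^2 \<le> (2 * exp x)^2"
    using True by (intro power_mono) auto
  hence h: "(1 + exp x)^2 \<le> 4 * exp x * exp x" by (simp add: power2_eq_square)
  have "exp (-K) \<le> exp (-x)" using assms True by simp
  hence "exp (-K) * (1 + exp x)^2 \<le> exp (-x) * (4 * exp x * exp x)"
    using h by (intro mult_mono) auto
  also have "\<dots> = 4 * exp x" by (simp add: exp_minus field_simps)
  finally have "exp (-K) * (1 + exp x)^2 \<le> 4 * exp x" .
  moreover have "(1 + exp x)^2 > 0" by (simp add: add_pos_pos)
  ultimately show ?thesis by (simp add: field_simps)
next
  case False
  have "(1 + exp x)^2 \<le> 2^2"
    using False by (intro power_mono) auto
  moreover have "exp (-K) \<le> exp x" using assms False by simp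
  ultimately have "exp (-K) * (1 + exp x)^2 \<le> exp x * 4"
    by (intro mult_mono) auto
  moreover have "(1 + exp x)^2 > 0" by (simp add: add_pos_pos)
  ultimately show ?thesis by (simp add: field_simps)
qed

lemma logistic_diff_le:
  fixes s t :: real
  assumes "s \<le> t"
  shows "logistic t - logistic s \<le> (t - s) / 4"
proof -
  have "(\<lambda>x. logistic x - x/4) t \<le> (\<lambda>x. logistic x - x/4) s"
  proof (rule DERIV_nonpos_imp_nonincreasing[OF assms])
    fix x assume "s \<le> x" "x \<le> t"
    have "((\<lambda>x. logistic x - x/4) has_real_derivative (exp x / (1 + exp x)^2 - 1/4)) (at x)"
      by (auto intro!: derivative_eq_intros logistic_deriv)
    moreover have "exp x / (1 + exp x)^2 - 1/4 \<le> 0" using logistic_deriv_le[of x] by simp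
    ultimately show "\<exists>y. ((\<lambda>x. logistic x - x/4) has_real_derivative y) (at x) \<and> y \<le> 0" by blast
  qed
  thus ?thesis by simp
qed

lemma logistic_diff_ge:
  fixes s t K :: real
  assumes "s \<le> t" "\<bar>s\<bar> \<le> K" "\<bar>t\<bar> \<le> K"
  shows "exp (-K) / 4 * (t - s) \<le> logistic t - logistic s"
proof -
  have "(\<lambda>x. logistic x - exp (-K)/4 * x) s \<le> (\<lambda>x. logistic x - exp (-K)/4 * x) t"
  proof (rule DERIV_nonneg_imp_nondecreasing[OF assms(1)])
    fix x assume "s \<le> x" "x \<le> t"
    hence "\<bar>x\<bar> \<le> K" using assms by auto
    have "((\<lambda>x. logistic x - exp (-K)/4 * x) has_real_derivative (exp x / (1 + exp x)^2 - exp (-K)/4)) (at x)"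
      by (auto intro!: derivative_eq_intros logistic_deriv)
    moreover have "exp x / (1 + exp x)^2 - exp (-K)/4 \<ge> 0" using logistic_deriv_ge[OF \<open>\<bar>x\<bar> \<le> K\<close>] by simp
    ultimately show "\<exists>y. ((\<lambda>x. logistic x - exp (-K)/4 * x) has_real_derivative y) (at x) \<and> 0 \<le> y" by blast
  qed
  thus ?thesis by (simp add: algebra_simps diff_divide_distrib)
qed




lemma logistic_prod_nonneg: "0 \<le> (logistic x - logistic y) * ((x::real) - y)"

proof (cases "x \<le> y")
  case True
  then have "logistic x \<le> logistic y"
    using logistic_strict_mono[of x y] by (cases "x = y") auto
  then show ?thesis using True by (intro mult_nonpos_nonpos) auto
next
  case False
  then have "logistic y < logistic x" by (auto intro: logistic_strict_mono)
  then show ?thesis using False by auto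
qed

lemma logistic_prod_zero: "(logistic x - logistic y) * ((x::real) - y) = 0 \<Longrightarrow> x = y"
proof (rule ccontr)
  assume h: "(logistic x - logistic y) * (x - y) = 0" "x \<noteq> y"
  then have "logistic x \<noteq> logistic y"
    by (metis linorder_neqE_linordered_idom logistic_strict_mono order_less_irrefl)
  with h show False by simp
qed

lemma no_mle_2: "\<not> is_mle 2 A \<theta>"
proof
  assume h: "is_mle 2 A \<theta>"
  have s: "{k. k < (2::nat) \<and> k \<noteq> 0} = {1}" by auto
  have e: "{k. k < (2::nat) \<and> k \<noteq> 0 \<and> A 0 k} = (if A 0 1 then {1} else {})"
    by (auto simp: less_2_cases_iff)
  from h have "real (outdeg 2 A 0) = (\<Sum>k\<in>oth 2 0. edge_prob 2 \<theta> 0 k)"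
    unfolding is_mle_def by simp
  also have "\<dots> = edge_prob 2 \<theta> 0 1" by (simp only: s) simp
  finally have "real (outdeg 2 A 0) = edge_prob 2 \<theta> 0 1" .
  then have "real (outdeg 2 A 0) = logistic (\<theta> 0 + beta_of 2 \<theta> 1)"
    by (simp add: edge_prob_def alpha_of_def)
  moreover have "real (outdeg 2 A 0) = 0 \<or> real (outdeg 2 A 0) = 1"
    unfolding outdeg_def e by auto
  ultimately show False using logistic_pos logistic_lt1 by (metis less_irrefl)
qed

lemma mle_unique:
  assumes n: "n \<ge> 2" and h1: "is_mle n A \<theta>1" and h2: "is_mle n A \<theta>2" and k: "k < 2*n-1"
  shows "\<theta>1 k = \<theta>2 k"
proof (cases "n = 2")
  case True then show ?thesis using h1 no_mle_2 by simp
next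
  case False
  with n have n3: "n \<ge> 3" by simp
  define u where "u i = \<theta>1 i - \<theta>2 i" for i
  define v where "v j = beta_of n \<theta>1 j - beta_of n \<theta>2 j" for j
  define x1 where "x1 i j = \<theta>1 i + beta_of n \<theta>1 j" for i j
  define x2 where "x2 i j = \<theta>2 i + beta_of n \<theta>2 j" for i j
  define g where "g i j = logistic (x1 i j) - logistic (x2 i j)" for i j
  have ep: "edge_prob n \<theta> i j = logistic (\<theta> i + beta_of n \<theta> j)" for \<theta> i j
    by (simp add: edge_prob_def alpha_of_def)
  have x12: "x1 i j - x2 i j = u i + v j" for i j
    by (simp add: x1_def x2_def u_def v_def)
  have row: "(\<Sum>j\<in>oth n i. g i j) = 0" if "i < n" for i
    using h1 h2 that unfolding is_mle_def g_def x1_def x2_def ep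
    by (simp add: sum_subtractf)
  have col: "(\<Sum>i\<in>oth n j. g i j) = 0" if "j < n - 1" for j
    using h1 h2 that unfolding is_mle_def g_def x1_def x2_def ep
    by (simp add: sum_subtractf)
  have vlast: "v (n - 1) = 0" by (simp add: v_def beta_of_def)
  have colv: "v j * (\<Sum>i\<in>oth n j. g i j) = 0" if "j < n" for j
  proof (cases "j < n - 1")
    case True then show ?thesis using col by simp
  next
    case False then have "j = n - 1" using that by simp
    then show ?thesis using vlast by simp
  qed
  have "(\<Sum>p\<in>offdiag n. g (fst p) (snd p) * (u (fst p) + v (snd p)))
      = (\<Sum>p\<in>offdiag n. g (fst p) (snd p) * u (fst p)) + (\<Sum>p\<in>offdiag n. g (fst p) (snd p) * v (snd p))"
    by (simp add: distrib_left sum.distrib)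
  also have "(\<Sum>p\<in>offdiag n. g (fst p) (snd p) * u (fst p)) = (\<Sum>i<n. u i * (\<Sum>j\<in>oth n i. g i j))"
    by (simp add: sum_offdiag_rows sum_distrib_left mult.commute)
  also have "\<dots> = 0" using row by simp
  also have "(\<Sum>p\<in>offdiag n. g (fst p) (snd p) * v (snd p)) = (\<Sum>j<n. v j * (\<Sum>i\<in>oth n j. g i j))"
    by (simp add: sum_offdiag_cols sum_distrib_left mult.commute)
  also have "\<dots> = 0" using colv by (intro sum.neutral) auto
  finally have S0: "(\<Sum>p\<in>offdiag n. g (fst p) (snd p) * (u (fst p) + v (snd p))) = 0" by simp
  have nn: "\<forall>p\<in>offdiag n. 0 \<le> g (fst p) (snd p) * (u (fst p) + v (snd p))"
    using logistic_prod_nonneg by (simp add: g_def x12[symmetric])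
  have z: "u i + v j = 0" if "i < n" "j < n" "i \<noteq> j" for i j
  proof -
    have "(i,j) \<in> offdiag n" using that by (simp add: offdiag_def)
    then have "g i j * (u i + v j) = 0"
      using sum_nonneg_eq_0_iff[OF finite_offdiag nn[rule_format]] S0 by fastforce
    then have "x1 i j = x2 i j" unfolding g_def x12[symmetric] by (rule logistic_prod_zero)
    then show ?thesis using x12[of i j] by simp
  qed
  have u0: "u i = 0" if "i < n" "i \<noteq> n - 1" for i
    using z[of i "n-1"] that vlast n3 by simp
  have v0: "v j = 0" if "j < n" for j
  proof -
    obtain i where "i < n" "i \<noteq> n - 1" "i \<noteq> j"
    proof (cases "j = 0")
      case True then show ?thesis using n3 that[of 1] by simp
    next
      case False then show ?thesis using n3 that[of 0] by simp
    qed
    then show ?thesis using z[of i j] u0[of i] that by simp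
  qed
  have u1: "u (n - 1) = 0" using z[of "n-1" 0] v0[of 0] n3 by simp
  show ?thesis
  proof (cases "k < n")
    case True
    then have "u k = 0" using u0 u1 by (cases "k = n - 1") auto
    then show ?thesis by (simp add: u_def)
  next
    case False
    define j where "j = k - n"
    have j: "j < n - 1" "k = n + j" using False k by (auto simp: j_def)
    then have "v j = 0" using v0 by simp
    then show ?thesis using j by (simp add: v_def beta_of_def)
  qed
qed




definition MPH :: "nat \<Rightarrow> (nat \<Rightarrow> real) \<Rightarrow> (nat \<Rightarrow> real) \<Rightarrow> (nat \<Rightarrow> nat \<Rightarrow> real)
   \<Rightarrow> (nat \<Rightarrow> real) \<Rightarrow> (nat \<Rightarrow> real) \<Rightarrow> real \<Rightarrow> real \<Rightarrow> real \<Rightarrow> bool" where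
 "MPH n da db D e f E w R \<longleftrightarrow>
  (0 < w \<and> w \<le> 1/4 \<and> 0 \<le> E \<and> 0 < R \<and>
  (\<forall>i<n. \<forall>k<n. i \<noteq> k \<longrightarrow>
     (0 \<le> da i + db k \<longrightarrow> w * (da i + db k) \<le> D i k \<and> D i k \<le> (da i + db k) / 4) \<and>
     (da i + db k \<le> 0 \<longrightarrow> D i k \<le> w * (da i + db k) \<and> (da i + db k) / 4 \<le> D i k)) \<and>
  (\<forall>i<n. \<bar>da i\<bar> \<le> R \<and> \<bar>db i\<bar> \<le> R) \<and>
  (\<forall>i<n. (da i < R \<longrightarrow> e i \<le> (\<Sum>k\<in>oth n i. D i k)) \<and> (- R < da i \<longrightarrow> (\<Sum>k\<in>oth n i. D i k) \<le> e i)) \<and>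
  (\<forall>j<n. (db j < R \<longrightarrow> f j \<le> (\<Sum>k\<in>oth n j. D k j)) \<and> (- R < db j \<longrightarrow> (\<Sum>k\<in>oth n j. D k j) \<le> f j)) \<and>
  (\<forall>i<n. \<bar>e i\<bar> \<le> E \<and> \<bar>f i\<bar> \<le> E))"

lemma MPH_neg:
  assumes "MPH n da db D e f E w R"
  shows "MPH n (\<lambda>i. - da i) (\<lambda>i. - db i) (\<lambda>i k. - D i k) (\<lambda>i. - e i) (\<lambda>i. - f i) E w R"
  using assms unfolding MPH_def
  apply (simp add: sum_negf)
  apply (elim conjE)
  apply (intro conjI allI impI)
  apply (auto simp: algebra_simps)
  done

lemma MPH_tr:
  assumes "MPH n da db D e f E w R"
  shows "MPH n (\<lambda>i. - db i) (\<lambda>i. - da i) (\<lambda>i k. - D k i) (\<lambda>i. - f i) (\<lambda>i. - e i) E w R"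
  using assms unfolding MPH_def
  apply (simp add: sum_negf)
  apply (elim conjE)
  apply (intro conjI allI impI)
  apply (auto simp: algebra_simps)
  done

definition mp_eps :: "nat \<Rightarrow> real \<Rightarrow> real \<Rightarrow> real" where
  "mp_eps n E w = E / ((real n - 1) * w)"

definition mp_S :: "nat \<Rightarrow> real \<Rightarrow> real \<Rightarrow> real" where
  "mp_S n E w = (E + (real n - 1) * mp_eps n E w / 2) / w"

lemma MPH_basic:
  assumes "MPH n da db D e f E w R"
  shows "0 < w" "w \<le> 1/4" "0 \<le> E" "0 < R"
  using assms by (auto simp: MPH_def)

lemma mp_eps_nonneg: "MPH n da db D e f E w R \<Longrightarrow> n \<ge> 2 \<Longrightarrow> 0 \<le> mp_eps n E w"
  using MPH_basic[of n da db D e f E w R] unfolding mp_eps_def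
  by (auto intro!: divide_nonneg_pos mult_pos_pos)

lemma mp_S_nonneg: "MPH n da db D e f E w R \<Longrightarrow> n \<ge> 2 \<Longrightarrow> 0 \<le> mp_S n E w"
  using MPH_basic[of n da db D e f E w R] mp_eps_nonneg[of n da db D e f E w R] unfolding mp_S_def
  by (auto intro!: divide_nonneg_pos add_nonneg_nonneg)

lemma HL1:
  assumes H: "MPH n da db D e f E w R" and n: "n \<ge> 2" and i: "i < n" and j: "j < n"
    and imax: "\<forall>i'<n. da i' \<le> da i" and jmin: "\<forall>j'<n. db j \<le> db j'"
  shows "da i + db j \<le> mp_eps n E w"
proof (cases "da i + db j \<le> 0")
  case True then show ?thesis using mp_eps_nonneg[OF H n] by linarith
next
  case False
  define m where "m = da i + db j"
  have m: "0 < m" using False by (simp add: m_def)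
  from H have w: "0 < w" and dbR: "\<bar>db j\<bar> \<le> R" using j by (auto simp: MPH_def)
  have "- R < da i" using m dbR by (simp add: m_def abs_le_iff)
  then have up: "(\<Sum>k\<in>oth n i. D i k) \<le> e i" using H i by (auto simp: MPH_def)
  have eE: "e i \<le> E" using H i by (auto simp: MPH_def)
  have lb: "w * m \<le> D i k" if k: "k \<in> oth n i" for k
  proof -
    have "db j \<le> db k" using jmin k by simp
    then have d: "m \<le> da i + db k" by (simp add: m_def)
    then have "w * (da i + db k) \<le> D i k" using H i k m by (auto simp: MPH_def)
    moreover have "w * m \<le> w * (da i + db k)" using d w by (simp add: mult_left_mono)
    ultimately show ?thesis by linarith
  qed
  have "of_nat (card (oth n i)) * (w * m) \<le> (\<Sum>k\<in>oth n i. D i k)"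
    by (rule sum_bounded_below) (use lb in auto)
  then have "(real n - 1) * (w * m) \<le> E" using up eE card_oth[OF i] n
    by (simp add: of_nat_diff)
  then have "m * ((real n - 1) * w) \<le> E" by (simp add: algebra_simps)
  moreover have "0 < (real n - 1) * w" using n w by simp
  ultimately show ?thesis unfolding m_def mp_eps_def by (simp add: pos_le_divide_eq)
qed

lemma HL3:
  assumes H: "MPH n da db D e f E w R" and n: "n \<ge> 2" and i: "i < n" and j: "j < n"
    and jmin: "\<forall>j'<n. db j \<le> db j'"
    and mlow: "- mp_eps n E w \<le> da i + db j" and dai: "- R < da i"
  shows "(\<Sum>k\<in>oth n i. db k - db j) \<le> mp_S n E w"
proof -
  define \<epsilon> where "\<epsilon> = mp_eps n E w"
  define m where "m = da i + db j"
  have \<epsilon>0: "0 \<le> \<epsilon>" using mp_eps_nonneg[OF H n] by (simp add: \<epsilon>_def)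
  from H have w: "0 < w" "w \<le> 1/4" by (auto simp: MPH_def)
  have up: "(\<Sum>k\<in>oth n i. D i k) \<le> e i" using H i dai by (auto simp: MPH_def)
  have eE: "e i \<le> E" using H i by (auto simp: MPH_def)
  have mlow': "- \<epsilon> \<le> m" using mlow by (simp add: \<epsilon>_def m_def)
  have wm: "- (\<epsilon> / 4) \<le> w * m"
  proof -
    have "w * (- \<epsilon>) \<le> w * m" using mlow' w by (intro mult_left_mono) auto
    moreover have "w * \<epsilon> \<le> (1/4) * \<epsilon>" using w \<epsilon>0 by (intro mult_right_mono) auto
    ultimately show ?thesis by simp
  qed
  have lb: "w * (db k - db j) - \<epsilon> / 2 \<le> D i k" if k: "k \<in> oth n i" for k
  proof -
    have "db j \<le> db k" using jmin k by simp
    show ?thesis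
    proof (cases "0 \<le> da i + db k")
      case True
      then have "w * (da i + db k) \<le> D i k" using H i k by (auto simp: MPH_def)
      moreover have "w * (da i + db k) = w * (db k - db j) + w * m"
        by (simp add: m_def algebra_simps)
      ultimately show ?thesis using wm \<epsilon>0 by linarith
    next
      case False
      then have "(da i + db k) / 4 \<le> D i k" using H i k by (auto simp: MPH_def)
      moreover have "db k - db j \<le> \<epsilon>" using False mlow' by (simp add: m_def)
      then have "w * (db k - db j) \<le> (1/4) * \<epsilon>"
        using w \<epsilon>0 \<open>db j \<le> db k\<close> by (intro mult_mono) auto
      then have "w * (db k - db j) \<le> \<epsilon> / 4" by simp
      moreover have "- \<epsilon> \<le> da i + db k" using mlow' \<open>db j \<le> db k\<close> by (simp add: m_def)
      then have "- \<epsilon> / 4 \<le> (da i + db k) / 4" by (simp add: divide_right_mono)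
      ultimately show ?thesis by linarith
    qed
  qed
  have "(\<Sum>k\<in>oth n i. w * (db k - db j) - \<epsilon> / 2) \<le> (\<Sum>k\<in>oth n i. D i k)"
    by (rule sum_mono) (use lb in auto)
  also have "(\<Sum>k\<in>oth n i. w * (db k - db j) - \<epsilon> / 2) = w * (\<Sum>k\<in>oth n i. db k - db j) - (real n - 1) * \<epsilon> / 2"
    using card_oth[OF i] n by (simp only: sum_subtractf sum_distrib_left[symmetric] sum_constant) (simp add: of_nat_diff)
  finally have "w * (\<Sum>k\<in>oth n i. db k - db j) \<le> E + (real n - 1) * \<epsilon> / 2" using up eE by linarith
  then show ?thesis using w unfolding mp_S_def \<epsilon>_def by (simp add: pos_le_divide_eq mult.commute)
qed

lemma ex_argmax: "0 < (n::nat) \<Longrightarrow> \<exists>i<n. \<forall>i'<n. (f i' :: real) \<le> f i"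
proof -
  assume n: "0 < n"
  have "Max (f ` {..<n}) \<in> f ` {..<n}" using n by (intro Max_in finite_imageI) auto
  then obtain i where i: "i < n" "f i = Max (f ` {..<n})" by auto
  have "\<forall>i'<n. f i' \<le> f i" using i by (auto intro: Max_ge)
  with i show ?thesis by blast
qed

lemma ex_argmin: "0 < (n::nat) \<Longrightarrow> \<exists>i<n. \<forall>i'<n. (f i :: real) \<le> f i'"
  using ex_argmax[of n "\<lambda>i. - f i"] by force

lemma max_principle:
  assumes H: "MPH n da db D e f E w R" and n: "n \<ge> 3"
  defines "spr \<equiv> mp_eps n E w + 2 * mp_S n E w / (real n - 2)"
  shows "\<forall>i<n. \<forall>k<n. \<bar>da i + db k\<bar> \<le> mp_eps n E w + spr \<and> \<bar>db i - db k\<bar> \<le> spr"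
proof -
  define \<epsilon> where "\<epsilon> = mp_eps n E w"
  define S where "S = mp_S n E w"
  have n2: "n \<ge> 2" using n by simp
  have \<epsilon>0: "0 \<le> \<epsilon>" using mp_eps_nonneg[OF H n2] by (simp add: \<epsilon>_def)
  have S0: "0 \<le> S" using mp_S_nonneg[OF H n2] by (simp add: S_def)
  have Hn: "MPH n (\<lambda>i. - da i) (\<lambda>i. - db i) (\<lambda>i k. - D i k) (\<lambda>i. - e i) (\<lambda>i. - f i) E w R"
    by (rule MPH_neg[OF H])
  have Ht: "MPH n (\<lambda>i. - db i) (\<lambda>i. - da i) (\<lambda>i k. - D k i) (\<lambda>i. - f i) (\<lambda>i. - e i) E w R"
    by (rule MPH_tr[OF H])
  have Htn: "MPH n (\<lambda>i. - (- db i)) (\<lambda>i. - (- da i)) (\<lambda>i k. - (- D k i)) (\<lambda>i. - (- f i)) (\<lambda>i. - (- e i)) E w R"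
    by (rule MPH_tr[OF Hn])
  have n0: "0 < n" using n by simp
  obtain i where i: "i < n" "\<forall>i'<n. da i' \<le> da i" using ex_argmax[OF n0] by blast
  obtain i' where i': "i' < n" "\<forall>i''<n. da i' \<le> da i''" using ex_argmin[OF n0] by blast
  obtain j where j: "j < n" "\<forall>j'<n. db j' \<le> db j" using ex_argmax[OF n0] by blast
  obtain j' where j': "j' < n" "\<forall>j''<n. db j' \<le> db j''" using ex_argmin[OF n0] by blast
  have R: "\<forall>i<n. \<bar>da i\<bar> \<le> R \<and> \<bar>db i\<bar> \<le> R" using H by (simp add: MPH_def)
  have m_up: "da i + db j' \<le> \<epsilon>" using HL1[OF H n2 i(1) j'(1) i(2) j'(2)] by (simp add: \<epsilon>_def)
  have m_lo: "- \<epsilon> \<le> da i + db j'" using HL1[OF Ht n2 j'(1) i(1)] j'(2) i(2) by (simp add: \<epsilon>_def)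
  have m'_lo: "- \<epsilon> \<le> da i' + db j" using HL1[OF Hn n2 i'(1) j(1)] j(2) i'(2) by (simp add: \<epsilon>_def)
  have m'_up: "da i' + db j \<le> \<epsilon>" using HL1[OF Htn n2 j(1) i'(1)] j(2) i'(2) by (simp add: \<epsilon>_def)
  have sp: "db j - db j' \<le> \<epsilon> + 2 * S / (real n - 2)"
  proof (cases "da i \<le> - R \<or> R \<le> da i'")
    case True
    then have "db j - db j' \<le> \<epsilon>"
    proof
      assume "da i \<le> - R"
      then show ?thesis using m_lo R j(1) by force
    next
      assume "R \<le> da i'"
      then show ?thesis using m'_up R j'(1) by force
    qed
    moreover have "0 \<le> 2 * S / (real n - 2)" using S0 n by simp
    ultimately show ?thesis by linarith
  next
    case False
    have s1: "(\<Sum>k\<in>oth n i. db k - db j') \<le> S"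
      using HL3[OF H n2 i(1) j'(1) j'(2)] m_lo False by (simp add: \<epsilon>_def S_def)
    have s2: "(\<Sum>k\<in>oth n i'. db j - db k) \<le> S"
      using HL3[OF Hn n2 i'(1) j(1)] j(2) m'_up False by (simp add: \<epsilon>_def S_def)
    define K where "K = {..<n} - {i, i'}"
    have Ksub1: "K \<subseteq> oth n i" and Ksub2: "K \<subseteq> oth n i'" by (auto simp: K_def)
    have cK: "real n - 2 \<le> real (card K)"
    proof -
      have "card {i, i'} \<le> 2" by (simp add: card_insert_le_m1)
      moreover have "card K = n - card {i, i'}" unfolding K_def using i i'
        by (subst card_Diff_subset) auto
      ultimately show ?thesis by linarith
    qed
    have "(\<Sum>k\<in>K. db j - db j') = (\<Sum>k\<in>K. db k - db j') + (\<Sum>k\<in>K. db j - db k)"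
      by (simp add: sum.distrib[symmetric])
    also have "(\<Sum>k\<in>K. db k - db j') \<le> (\<Sum>k\<in>oth n i. db k - db j')"
      by (rule sum_mono2) (use Ksub1 j' in auto)
    also have "(\<Sum>k\<in>K. db j - db k) \<le> (\<Sum>k\<in>oth n i'. db j - db k)"
      by (rule sum_mono2) (use Ksub2 j in auto)
    finally have "real (card K) * (db j - db j') \<le> 2 * S" using s1 s2 by simp
    moreover have "0 \<le> db j - db j'" using j j' by auto
    ultimately have "(real n - 2) * (db j - db j') \<le> 2 * S"
      using cK by (meson mult_right_mono order_trans)
    moreover have "0 < real n - 2" using n by simp
    ultimately have "db j - db j' \<le> 2 * S / (real n - 2)"
      by (simp add: pos_le_divide_eq mult.commute)
    then show ?thesis using \<epsilon>0 by linarith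
  qed
  show ?thesis
  proof (intro allI impI conjI)
    fix a k assume a: "a < n" and k: "k < n"
    have "da a + db k \<le> da i + db j" using i j a k by (simp add: add_mono)
    moreover have "da i' + db j' \<le> da a + db k" using i' j' a k by (simp add: add_mono)
    ultimately show "\<bar>da a + db k\<bar> \<le> mp_eps n E w + spr"
      using m_up m'_lo sp unfolding spr_def \<epsilon>_def[symmetric] S_def[symmetric] by linarith
    have "db j' \<le> db a" "db a \<le> db j" "db j' \<le> db k" "db k \<le> db j" using j j' a k by auto
    then show "\<bar>db a - db k\<bar> \<le> spr"
      using sp unfolding spr_def \<epsilon>_def[symmetric] S_def[symmetric] by linarith
  qed
qed




definition Lobj :: "nat \<Rightarrow> (nat \<Rightarrow> nat \<Rightarrow> bool) \<Rightarrow> (nat \<Rightarrow> real) \<Rightarrow> real" where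
  "Lobj n A x = (\<Sum>p\<in>offdiag n. ln (1 + exp (x (fst p) + x (n + snd p)))
      - (if A (fst p) (snd p) then x (fst p) + x (n + snd p) else 0))"

definition GP :: "nat \<Rightarrow> (nat \<Rightarrow> nat \<Rightarrow> bool) \<Rightarrow> (nat \<Rightarrow> real) \<Rightarrow> nat \<Rightarrow> real" where
  "GP n A x q = (if q < n then (\<Sum>k\<in>oth n q. logistic (x q + x (n + k))) - real (outdeg n A q)
     else (\<Sum>k\<in>oth n (q - n). logistic (x k + x q)) - real (indeg n A (q - n)))"

lemma term_deriv:
  "((\<lambda>t. ln (1 + exp (s + c * t)) - (if b then s + c * t else 0)) has_real_derivative
     (c * (logistic (s + c * t) - (if b then 1 else 0)))) (at t)"
proof -
  have "((\<lambda>t. ln (1 + exp (s + c * t)) - (if b then s + c * t else 0)) has_real_derivative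
     (exp (s + c * t) * c / (1 + exp (s + c * t)) - (if b then c else 0))) (at t)"
    by (cases b) (auto intro!: derivative_eq_intros)
  moreover have "exp (s + c * t) * c / (1 + exp (s + c * t)) - (if b then c else 0)
      = c * (logistic (s + c * t) - (if b then 1 else 0))"
    by (simp add: logistic_def algebra_simps)
  ultimately show ?thesis by simp
qed

lemma Lobj_upd:
  "Lobj n A (x(q := x q + t)) = (\<Sum>p\<in>offdiag n.
      ln (1 + exp ((x (fst p) + x (n + snd p)) + ((if fst p = q then 1 else 0) + (if n + snd p = q then 1 else 0)) * t))
      - (if A (fst p) (snd p) then (x (fst p) + x (n + snd p)) + ((if fst p = q then 1 else 0) + (if n + snd p = q then 1 else 0)) * t else 0))"
  unfolding Lobj_def by (intro sum.cong refl) (auto simp: algebra_simps)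

lemma Lobj_deriv:
  assumes q: "q < 2 * n"
  shows "((\<lambda>t. Lobj n A (x(q := x q + t))) has_real_derivative GP n A x q) (at 0)"
proof -
  define c where "c p = ((if fst p = q then 1 else 0) + (if n + snd p = q then 1 else 0) :: real)" for p
  define s where "s p = x (fst p) + x (n + snd p)" for p
  have eq: "(\<lambda>t. Lobj n A (x(q := x q + t))) = (\<lambda>t. \<Sum>p\<in>offdiag n.
      ln (1 + exp (s p + c p * t)) - (if A (fst p) (snd p) then s p + c p * t else 0))"
    unfolding Lobj_upd c_def s_def by simp
  have d: "((\<lambda>t. Lobj n A (x(q := x q + t))) has_real_derivative
      (\<Sum>p\<in>offdiag n. c p * (logistic (s p + c p * 0) - (if A (fst p) (snd p) then 1 else 0)))) (at 0)"
    unfolding eq by (intro DERIV_sum term_deriv)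
  have "(\<Sum>p\<in>offdiag n. c p * (logistic (s p + c p * 0) - (if A (fst p) (snd p) then 1 else 0)))
     = GP n A x q"
  proof (cases "q < n")
    case True
    have "(\<Sum>p\<in>offdiag n. c p * (logistic (s p + c p * 0) - (if A (fst p) (snd p) then 1 else 0)))
        = (\<Sum>i<n. \<Sum>j\<in>oth n i. (if i = q then logistic (x i + x (n + j)) - (if A i j then 1 else 0) else 0))"
      unfolding sum_offdiag_rows using True by (intro sum.cong refl) (auto simp: c_def s_def)
    also have "\<dots> = (\<Sum>i<n. if i = q then (\<Sum>j\<in>oth n i. logistic (x i + x (n + j)) - (if A i j then 1 else 0)) else 0)"
      by (intro sum.cong refl) auto
    also have "\<dots> = (\<Sum>j\<in>oth n q. logistic (x q + x (n + j)) - (if A q j then 1 else 0))"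
      using True by (simp add: sum.delta)
    also have "\<dots> = GP n A x q"
      using True by (simp add: GP_def sum_subtractf outdeg_def sum_card_oth)
    finally show ?thesis .
  next
    case False
    define j0 where "j0 = q - n"
    have j0: "j0 < n" "q = n + j0" using False q by (auto simp: j0_def)
    have "(\<Sum>p\<in>offdiag n. c p * (logistic (s p + c p * 0) - (if A (fst p) (snd p) then 1 else 0)))
        = (\<Sum>j<n. \<Sum>i\<in>oth n j. (if j = j0 then logistic (x i + x (n + j)) - (if A i j then 1 else 0) else 0))"
      unfolding sum_offdiag_cols using j0 by (intro sum.cong refl) (auto simp: c_def s_def)
    also have "\<dots> = (\<Sum>j<n. if j = j0 then (\<Sum>i\<in>oth n j. logistic (x i + x (n + j)) - (if A i j then 1 else 0)) else 0)"
      by (intro sum.cong refl) auto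
    also have "\<dots> = (\<Sum>i\<in>oth n j0. logistic (x i + x (n + j0)) - (if A i j0 then 1 else 0))"
      using j0 by (simp add: sum.delta)
    also have "\<dots> = GP n A x q"
      using j0 False by (simp add: GP_def sum_subtractf indeg_def sum_card_oth)
    finally show ?thesis .
  qed
  with d show ?thesis by simp
qed

lemma KKT:
  assumes q: "q < 2 * n"
    and xB: "\<forall>k. lo k \<le> x k \<and> x k \<le> hi k"
    and min: "\<forall>y. (\<forall>k. lo k \<le> y k \<and> y k \<le> hi k) \<longrightarrow> Lobj n A x \<le> Lobj n A y"
  shows "x q < hi q \<Longrightarrow> 0 \<le> GP n A x q" and "lo q < x q \<Longrightarrow> GP n A x q \<le> 0"
proof -
  define g where "g t = Lobj n A (x(q := x q + t))" for t
  have g0: "g 0 = Lobj n A x" by (simp add: g_def)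
  have der: "(g has_real_derivative GP n A x q) (at 0)" unfolding g_def by (rule Lobj_deriv[OF q])
  have inB: "Lobj n A x \<le> g t" if "lo q \<le> x q + t" "x q + t \<le> hi q" for t
    unfolding g_def using that xB by (intro min[rule_format]) auto
  show "0 \<le> GP n A x q" if hq: "x q < hi q"
  proof (rule ccontr)
    assume "\<not> 0 \<le> GP n A x q"
    then obtain d where d: "d > 0" "\<forall>h>0. h < d \<longrightarrow> g 0 > g (0 + h)"
      using DERIV_neg_dec_right[OF der] by force
    define h where "h = min (d / 2) ((hi q - x q) / 2)"
    have "h \<le> (hi q - x q) / 2" unfolding h_def by (rule min.cobounded2)
    then have h: "h > 0" "h < d" "x q + h \<le> hi q" using d hq by (auto simp: h_def)
    have "g 0 > g h" using d h by auto
    moreover have "Lobj n A x \<le> g h" using h xB by (intro inB) (auto intro: order_trans)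
    ultimately show False using g0 by simp
  qed
  show "GP n A x q \<le> 0" if hq: "lo q < x q"
  proof (rule ccontr)
    assume "\<not> GP n A x q \<le> 0"
    then obtain d where d: "d > 0" "\<forall>h>0. h < d \<longrightarrow> g (0 - h) < g 0"
      using DERIV_pos_inc_left[OF der] by force
    define h where "h = min (d / 2) ((x q - lo q) / 2)"
    have "h \<le> (x q - lo q) / 2" unfolding h_def by (rule min.cobounded2)
    then have h: "h > 0" "h < d" "lo q \<le> x q - h" using d hq by (auto simp: h_def)
    have "g (0 - h) < g 0" using d h by auto
    moreover have "x q \<le> hi q" using xB by blast
    then have "Lobj n A x \<le> g (0 - h)" using h by (intro inB) auto
    ultimately show False using g0 by simp
  qed
qed

lemma cont_term: "continuous_on UNIV (\<lambda>x::nat\<Rightarrow>real. (if b then x i + x j else 0))"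
  by (cases b) (auto intro!: continuous_intros)

lemma Lobj_cont: "continuous_on UNIV (Lobj n A)"
  unfolding Lobj_def[abs_def]
  by (intro continuous_intros cont_term) auto

lemma box_compact: "compact (PiE UNIV (\<lambda>k. {lo k .. (hi k::real)}))"
proof -
  have "compactin (product_topology (\<lambda>_. euclidean) UNIV) (PiE UNIV (\<lambda>k. {lo k .. (hi k::real)}))"
    by (simp add: compactin_PiE)
  then show ?thesis by (simp add: euclidean_product_topology)
qed

lemma box_min:
  assumes "\<forall>k. lo k \<le> (hi k :: real)"
  shows "\<exists>x. (\<forall>k. lo k \<le> x k \<and> x k \<le> hi k) \<and>
     (\<forall>y. (\<forall>k. lo k \<le> y k \<and> y k \<le> hi k) \<longrightarrow> Lobj n A x \<le> Lobj n A y)"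
proof -
  define B where "B = PiE UNIV (\<lambda>k. {lo k .. hi k})"
  have Beq: "y \<in> B \<longleftrightarrow> (\<forall>k. lo k \<le> y k \<and> y k \<le> hi k)" for y by (auto simp: B_def)
  have "B \<noteq> {}" using assms Beq[of lo] by auto
  moreover have "compact B" unfolding B_def by (rule box_compact)
  moreover have "continuous_on B (Lobj n A)" using Lobj_cont continuous_on_subset by blast
  ultimately obtain x where "x \<in> B" "\<forall>y\<in>B. Lobj n A x \<le> Lobj n A y"
    using continuous_attains_inf by blast
  then show ?thesis using Beq by blast
qed




lemma supnorm_ge: "k < 2 * n - 1 \<Longrightarrow> \<bar>\<theta> k\<bar> \<le> supnorm n \<theta>"
  unfolding supnorm_def by (intro Max_ge) auto

lemma supnorm_nonneg: "n \<ge> 1 \<Longrightarrow> 0 \<le> supnorm n \<theta>"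
  using supnorm_ge[of 0 n \<theta>] by simp

lemma supdist_le:
  assumes "n \<ge> 1" "\<forall>k<2*n-1. \<bar>\<theta>1 k - \<theta>2 k\<bar> \<le> c"
  shows "supdist n \<theta>1 \<theta>2 \<le> c"
proof -
  have "0 < 2 * n - 1" using assms(1) by simp
  then have "0 \<in> {..<2*n-1}" by simp
  then have ne: "{..<2*n-1} \<noteq> {}" by blast
  show ?thesis
    unfolding supdist_def supnorm_def using assms ne by (subst Max_le_iff) auto
qed

definition wf :: "real \<Rightarrow> real" where "wf M = exp (- (2 * M + 2)) / 4"

definition Errf :: "nat \<Rightarrow> real \<Rightarrow> real \<Rightarrow> real" where
  "Errf n t M = mp_eps n t (wf M) + (mp_eps n t (wf M) + 2 * mp_S n t (wf M) / (real n - 2))"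

lemma edge_prob_xs:
  assumes "i < n" "k < n"
  shows "edge_prob n \<theta> i k = logistic ((if i < 2*n-1 then \<theta> i else 0) + (if n + k < 2*n-1 then \<theta> (n+k) else 0))"
  using assms by (auto simp: edge_prob_def alpha_of_def beta_of_def)

lemma edge_prob_norm:
  assumes "i < n" "k < n" "\<theta> (n + (n - 1)) = 0"
  shows "edge_prob n \<theta> i k = logistic (\<theta> i + \<theta> (n+k))"
proof -
  have "beta_of n \<theta> k = \<theta> (n + k)"
  proof (cases "k < n - 1")
    case True then show ?thesis by (simp add: beta_of_def)
  next
    case False
    then have "k = n - 1" using assms(2) by simp
    then have "\<theta> (n + k) = \<theta> (n + (n - 1))" by simp
    then show ?thesis using assms(3) False by (simp add: beta_of_def)
  qed
  then show ?thesis by (simp add: edge_prob_def alpha_of_def)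
qed

theorem det_exist:
  fixes n :: nat and A :: "nat \<Rightarrow> nat \<Rightarrow> bool" and \<theta> :: "nat \<Rightarrow> real" and t :: real
  assumes n3: "n \<ge> 3" and t0: "0 \<le> t"
    and dout: "\<forall>i<n. \<bar>real (outdeg n A i) - (\<Sum>k\<in>oth n i. edge_prob n \<theta> i k)\<bar> \<le> t"
    and din: "\<forall>j<n. \<bar>real (indeg n A j) - (\<Sum>k\<in>oth n j. edge_prob n \<theta> k j)\<bar> \<le> t"
    and small: "Errf n t (supnorm n \<theta>) < 1"
  shows "\<exists>\<theta>h. is_mle n A \<theta>h \<and> supdist n \<theta>h \<theta> \<le> Errf n t (supnorm n \<theta>)"
proof -
  define M where "M = supnorm n \<theta>"
  define w where "w = wf M"
  define Err where "Err = Errf n t M"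
  have M0: "0 \<le> M" unfolding M_def using n3 by (intro supnorm_nonneg) simp
  define xs where "xs k = (if k < 2*n-1 then \<theta> k else 0)" for k
  have xsb: "\<bar>xs k\<bar> \<le> M" for k
    using supnorm_ge[of k n \<theta>] M0 by (auto simp: xs_def M_def)
  have ep: "edge_prob n \<theta> i k = logistic (xs i + xs (n + k))" if "i < n" "k < n" for i k
    using edge_prob_xs[OF that, of \<theta>] by (simp add: xs_def)
  define lo where "lo k = (if k < 2*n then xs k - 1 else 0)" for k
  define hi where "hi k = (if k < 2*n then xs k + 1 else 0)" for k
  obtain xh where xhB: "\<forall>k. lo k \<le> xh k \<and> xh k \<le> hi k"
    and xhmin: "\<forall>y. (\<forall>k. lo k \<le> y k \<and> y k \<le> hi k) \<longrightarrow> Lobj n A xh \<le> Lobj n A y"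
    using box_min[of lo hi n A] unfolding lo_def hi_def by fastforce
  have xhb: "\<bar>xh k - xs k\<bar> \<le> 1" if "k < 2*n" for k
    using xhB[rule_format, of k] that by (auto simp: lo_def hi_def)
  define da where "da i = xh i - xs i" for i
  define db where "db j = xh (n + j) - xs (n + j)" for j
  define D where "D i k = logistic (xh i + xh (n + k)) - logistic (xs i + xs (n + k))" for i k
  define e where "e i = real (outdeg n A i) - (\<Sum>k\<in>oth n i. logistic (xs i + xs (n + k)))" for i
  define f where "f j = real (indeg n A j) - (\<Sum>k\<in>oth n j. logistic (xs k + xs (n + j)))" for j
  have w0: "0 < w" by (simp add: w_def wf_def)
  have w4: "w \<le> 1/4" using M0 by (simp add: w_def wf_def)
  have H: "MPH n da db D e f t w 1"
    unfolding MPH_def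
  proof (intro conjI)
    show "0 < w" "w \<le> 1/4" "0 \<le> t" "(0::real) < 1" using w0 w4 t0 by auto
    show "\<forall>i<n. \<forall>k<n. i \<noteq> k \<longrightarrow>
     (0 \<le> da i + db k \<longrightarrow> w * (da i + db k) \<le> D i k \<and> D i k \<le> (da i + db k) / 4) \<and>
     (da i + db k \<le> 0 \<longrightarrow> D i k \<le> w * (da i + db k) \<and> (da i + db k) / 4 \<le> D i k)"
    proof (intro allI impI)
      fix i k assume i: "i < n" and k: "k < n" and "i \<noteq> k"
      define s where "s = xs i + xs (n + k)"
      define s' where "s' = xh i + xh (n + k)"
      have sb: "\<bar>s\<bar> \<le> 2 * M + 2" using xsb[of i] xsb[of "n+k"] by (simp add: s_def)
      have s'b: "\<bar>s'\<bar> \<le> 2 * M + 2"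
        using xsb[of i] xsb[of "n+k"] xhb[of i] xhb[of "n+k"] i k by (simp add: s'_def)
      have dd: "da i + db k = s' - s" by (simp add: da_def db_def s_def s'_def)
      have DD: "D i k = logistic s' - logistic s" by (simp add: D_def s_def s'_def)
      have ww: "w = exp (- (2 * M + 2)) / 4" by (simp add: w_def wf_def)
      show "(0 \<le> da i + db k \<longrightarrow> w * (da i + db k) \<le> D i k \<and> D i k \<le> (da i + db k) / 4) \<and>
        (da i + db k \<le> 0 \<longrightarrow> D i k \<le> w * (da i + db k) \<and> (da i + db k) / 4 \<le> D i k)"
      proof (intro conjI impI)
        assume "0 \<le> da i + db k"
        then have le: "s \<le> s'" using dd by simp
        show "w * (da i + db k) \<le> D i k"
          using logistic_diff_ge[OF le sb s'b] unfolding dd DD ww by simp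
        show "D i k \<le> (da i + db k) / 4"
          using logistic_diff_le[OF le] unfolding dd DD by simp
      next
        assume "da i + db k \<le> 0"
        then have le: "s' \<le> s" using dd by simp
        have "w * (s - s') \<le> logistic s - logistic s'"
          using logistic_diff_ge[OF le s'b sb] unfolding ww by simp
        moreover have "w * (s' - s) = - (w * (s - s'))" by (simp add: algebra_simps)
        ultimately show "D i k \<le> w * (da i + db k)" unfolding dd DD by linarith
        have "logistic s - logistic s' \<le> (s - s') / 4" using logistic_diff_le[OF le] .
        then show "(da i + db k) / 4 \<le> D i k" unfolding dd DD by (simp add: diff_divide_distrib)
      qed
    qed
    show "\<forall>i<n. \<bar>da i\<bar> \<le> 1 \<and> \<bar>db i\<bar> \<le> 1"
      using xhb by (auto simp: da_def db_def)
    show "\<forall>i<n. (da i < 1 \<longrightarrow> e i \<le> (\<Sum>k\<in>oth n i. D i k)) \<and> (- 1 < da i \<longrightarrow> (\<Sum>k\<in>oth n i. D i k) \<le> e i)"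
    proof (intro allI impI conjI)
      fix i assume i: "i < n"
      have q: "i < 2 * n" using i by simp
      have eq: "(\<Sum>k\<in>oth n i. D i k) - e i = GP n A xh i"
        using i by (simp add: D_def e_def GP_def sum_subtractf)
      show "e i \<le> (\<Sum>k\<in>oth n i. D i k)" if "da i < 1"
      proof -
        have "xh i < hi i" using that i by (simp add: da_def hi_def)
        then have "0 \<le> GP n A xh i" by (rule KKT(1)[OF q xhB xhmin])
        then show ?thesis using eq by simp
      qed
      show "(\<Sum>k\<in>oth n i. D i k) \<le> e i" if "- 1 < da i"
      proof -
        have "lo i < xh i" using that i by (simp add: da_def lo_def)
        then have "GP n A xh i \<le> 0" by (rule KKT(2)[OF q xhB xhmin])
        then show ?thesis using eq by simp
      qed
    qed
    show "\<forall>j<n. (db j < 1 \<longrightarrow> f j \<le> (\<Sum>k\<in>oth n j. D k j)) \<and> (- 1 < db j \<longrightarrow> (\<Sum>k\<in>oth n j. D k j) \<le> f j)"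
    proof (intro allI impI conjI)
      fix j assume j: "j < n"
      have q: "n + j < 2 * n" using j by simp
      have eq: "(\<Sum>k\<in>oth n j. D k j) - f j = GP n A xh (n + j)"
        using j by (simp add: D_def f_def GP_def sum_subtractf)
      show "f j \<le> (\<Sum>k\<in>oth n j. D k j)" if "db j < 1"
      proof -
        have "xh (n + j) < hi (n + j)" using that j by (simp add: db_def hi_def)
        then have "0 \<le> GP n A xh (n + j)" by (rule KKT(1)[OF q xhB xhmin])
        then show ?thesis using eq by simp
      qed
      show "(\<Sum>k\<in>oth n j. D k j) \<le> f j" if "- 1 < db j"
      proof -
        have "lo (n + j) < xh (n + j)" using that j by (simp add: db_def lo_def)
        then have "GP n A xh (n + j) \<le> 0" by (rule KKT(2)[OF q xhB xhmin])
        then show ?thesis using eq by simp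
      qed
    qed
    show "\<forall>i<n. \<bar>e i\<bar> \<le> t \<and> \<bar>f i\<bar> \<le> t"
    proof (intro allI impI conjI)
      fix i assume i: "i < n"
      have "(\<Sum>k\<in>oth n i. edge_prob n \<theta> i k) = (\<Sum>k\<in>oth n i. logistic (xs i + xs (n + k)))"
        using i by (intro sum.cong refl) (auto simp: ep)
      then show "\<bar>e i\<bar> \<le> t" using dout i unfolding e_def by metis
      have "(\<Sum>k\<in>oth n i. edge_prob n \<theta> k i) = (\<Sum>k\<in>oth n i. logistic (xs k + xs (n + i)))"
        using i by (intro sum.cong refl) (auto simp: ep)
      then show "\<bar>f i\<bar> \<le> t" using din i unfolding f_def by metis
    qed
  qed
  have mp: "\<forall>i<n. \<forall>k<n. \<bar>da i + db k\<bar> \<le> Err \<and> \<bar>db i - db k\<bar> \<le> Err"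
    using max_principle[OF H n3] mp_eps_nonneg[OF H] n3
    unfolding Err_def Errf_def w_def[symmetric] by force
  define c where "c = xh (n + (n - 1))"
  have "\<not> (n + (n - 1) < 2*n - 1)" using n3 by simp
  then have xslast: "xs (n + (n - 1)) = 0" by (simp only: xs_def if_False)
  have dbl: "db (n - 1) = c" unfolding db_def c_def xslast by simp
  have dbl': "db (n - Suc 0) = c" using dbl by simp
  define xt where "xt k = (if k < n then xh k + c else if k < 2*n then xh k - c else 0)" for k
  have xtb: "\<bar>xt k - xs k\<bar> \<le> Err" if k: "k < 2*n" for k
  proof (cases "k < n")
    case True
    then have "xt k - xs k = da k + db (n - 1)" by (simp add: xt_def da_def dbl')
    then show ?thesis using mp True n3 by simp
  next
    case False
    define j where "j = k - n"
    have j: "j < n" "k = n + j" using False k by (auto simp: j_def)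
    then have "xt k - xs k = db j - db (n - 1)" using False using dbl' by (simp add: xt_def db_def)
    then show ?thesis using mp j n3 by simp
  qed
  have xtB: "\<forall>k. lo k < xt k \<and> xt k < hi k \<or> (k \<ge> 2*n \<and> xt k = 0 \<and> lo k = 0 \<and> hi k = 0)"
  proof
    fix k show "lo k < xt k \<and> xt k < hi k \<or> (k \<ge> 2*n \<and> xt k = 0 \<and> lo k = 0 \<and> hi k = 0)"
    proof (cases "k < 2 * n")
      case True
      then show ?thesis using xtb[OF True] small unfolding Err_def M_def
        by (auto simp: lo_def hi_def abs_le_iff)
    next
      case False then show ?thesis by (auto simp: lo_def hi_def xt_def)
    qed
  qed
  have xtB': "\<forall>k. lo k \<le> xt k \<and> xt k \<le> hi k"
  proof
    fix k show "lo k \<le> xt k \<and> xt k \<le> hi k" using xtB[rule_format, of k] by auto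
  qed
  have Leq: "Lobj n A xt = Lobj n A xh"
    unfolding Lobj_def
    by (intro sum.cong refl) (auto simp: offdiag_def xt_def)
  have xtmin: "\<forall>y. (\<forall>k. lo k \<le> y k \<and> y k \<le> hi k) \<longrightarrow> Lobj n A xt \<le> Lobj n A y"
    using xhmin Leq by simp
  have GP0: "GP n A xt q = 0" if q: "q < 2 * n" for q
  proof -
    have "lo q < xt q" "xt q < hi q" using xtB q by auto
    then show ?thesis using KKT[OF q xtB' xtmin] by force
  qed
  have xtlast: "xt (n + (n - 1)) = 0" using n3 by (simp add: xt_def c_def, arith)
  have epx: "edge_prob n xt i k = logistic (xt i + xt (n + k))" if "i < n" "k < n" for i k
    using edge_prob_norm[where \<theta>=xt and n=n and i=i and k=k] xtlast that by blast
  have mle: "is_mle n A xt"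
    unfolding is_mle_def
  proof (intro conjI allI impI)
    fix i assume i: "i < n"
    have "GP n A xt i = 0" using GP0 i by simp
    then have "real (outdeg n A i) = (\<Sum>k\<in>oth n i. logistic (xt i + xt (n + k)))"
      using i by (simp add: GP_def)
    also have "\<dots> = (\<Sum>k\<in>oth n i. edge_prob n xt i k)"
      using i by (intro sum.cong refl) (auto simp: epx)
    finally show "real (outdeg n A i) = (\<Sum>k\<in>oth n i. edge_prob n xt i k)" .
  next
    fix j assume j: "j < n - 1"
    have "GP n A xt (n + j) = 0" using GP0 j by simp
    then have "real (indeg n A j) = (\<Sum>k\<in>oth n j. logistic (xt k + xt (n + j)))"
      using j by (simp add: GP_def)
    also have "\<dots> = (\<Sum>k\<in>oth n j. edge_prob n xt k j)"
      using j by (intro sum.cong refl) (auto simp: epx)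
    finally show "real (indeg n A j) = (\<Sum>k\<in>oth n j. edge_prob n xt k j)" .
  qed
  have "supdist n xt \<theta> \<le> Err"
  proof (rule supdist_le)
    show "1 \<le> n" using n3 by simp
    show "\<forall>k<2 * n - 1. \<bar>xt k - \<theta> k\<bar> \<le> Err"
    proof (intro allI impI)
      fix k assume k: "k < 2 * n - 1"
      then have "k < 2 * n" by simp
      from xtb[OF this] k show "\<bar>xt k - \<theta> k\<bar> \<le> Err" by (simp add: xs_def)
    qed
  qed
  then show ?thesis using mle unfolding Err_def M_def by blast
qed




definition Qp :: "nat \<Rightarrow> (nat \<Rightarrow> real) \<Rightarrow> (nat \<times> nat \<Rightarrow> bool) pmf" where
  "Qp n \<theta> = Pi_pmf (offdiag n) False (\<lambda>p. bernoulli_pmf (edge_prob n \<theta> (fst p) (snd p)))"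

definition cur :: "(nat \<times> nat \<Rightarrow> bool) \<Rightarrow> nat \<Rightarrow> nat \<Rightarrow> bool" where
  "cur f = (\<lambda>i j. f (i, j))"

lemma edge_prob_01: "0 \<le> edge_prob n \<theta> i j" "edge_prob n \<theta> i j \<le> 1"
  using logistic_pos logistic_lt1 by (auto simp: edge_prob_def less_imp_le)

lemma Prob_eq: "Prob n \<theta> E = measure_pmf.prob (Qp n \<theta>) {f. cur f \<in> E}"
proof -
  define S where "S = {f. (\<forall>x. x \<notin> offdiag n \<longrightarrow> f x = False) \<and> cur f \<in> E}"
  have finS: "finite S"
  proof (rule finite_subset)
    show "S \<subseteq> PiE_dflt (offdiag n) False (\<lambda>_. UNIV)" by (auto simp: S_def PiE_dflt_def)
    show "finite (PiE_dflt (offdiag n) False (\<lambda>_. UNIV :: bool set))" by (intro finite_PiE_dflt) auto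
  qed
  have sub: "set_pmf (Qp n \<theta>) \<subseteq> {f. \<forall>x. x \<notin> offdiag n \<longrightarrow> f x = False}"
    unfolding Qp_def by (rule set_Pi_pmf_subset) simp
  have "{f. cur f \<in> E} \<inter> set_pmf (Qp n \<theta>) = S \<inter> set_pmf (Qp n \<theta>)"
    using sub by (auto simp: S_def)
  then have "measure_pmf.prob (Qp n \<theta>) {f. cur f \<in> E} = measure_pmf.prob (Qp n \<theta>) S"
    by (metis measure_Int_set_pmf)
  also have "\<dots> = (\<Sum>f\<in>S. pmf (Qp n \<theta>) f)" by (rule measure_measure_pmf_finite[OF finS])
  also have "\<dots> = (\<Sum>f\<in>S. mat_prob n \<theta> (cur f))"
  proof (rule sum.cong[OF refl])
    fix f assume f: "f \<in> S"
    have "pmf (Qp n \<theta>) f = (\<Prod>x\<in>offdiag n. pmf (bernoulli_pmf (edge_prob n \<theta> (fst x) (snd x))) (f x))"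
      using f unfolding Qp_def by (subst pmf_Pi) (auto simp: S_def)
    also have "\<dots> = mat_prob n \<theta> (cur f)"
      unfolding mat_prob_def cur_def
      by (intro prod.cong refl) (auto simp: edge_prob_01)
    finally show "pmf (Qp n \<theta>) f = mat_prob n \<theta> (cur f)" .
  qed
  also have "\<dots> = (\<Sum>A\<in>adj_mats n \<inter> E. mat_prob n \<theta> A)"
  proof (rule sum.reindex_bij_betw)
    show "bij_betw cur S (adj_mats n \<inter> E)"
    proof (rule bij_betwI[where g = "\<lambda>A p. A (fst p) (snd p)"])
      show "cur \<in> S \<rightarrow> adj_mats n \<inter> E"
        unfolding S_def adj_mats_def cur_def Pi_iff by blast
      show "(\<lambda>A p. A (fst p) (snd p)) \<in> adj_mats n \<inter> E \<rightarrow> S"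
        by (auto simp: S_def adj_mats_def cur_def)
      show "(\<lambda>p. cur f (fst p) (snd p)) = f" for f by (auto simp: cur_def)
      show "cur (\<lambda>p. A (fst p) (snd p)) = A" for A by (auto simp: cur_def)
    qed
  qed
  finally show ?thesis by (simp add: Prob_def)
qed

lemma expect_edge:
  assumes "p \<in> offdiag n"
  shows "measure_pmf.expectation (Qp n \<theta>) (\<lambda>f. if f p then 1 else 0 :: real) = edge_prob n \<theta> (fst p) (snd p)"
proof -
  have "measure_pmf.expectation (Qp n \<theta>) (\<lambda>f. if f p then 1 else 0 :: real)
      = measure_pmf.expectation (map_pmf (\<lambda>f. f p) (Qp n \<theta>)) (\<lambda>b. if b then 1 else 0 :: real)"
    by simp
  also have "map_pmf (\<lambda>f. f p) (Qp n \<theta>) = bernoulli_pmf (edge_prob n \<theta> (fst p) (snd p))"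
    unfolding Qp_def using assms by (subst Pi_pmf_component) auto
  finally show ?thesis using edge_prob_01 by simp
qed

lemma hoeff_set:
  assumes I: "I \<subseteq> offdiag n" "I \<noteq> {}" and t: "0 \<le> t"
  shows "measure_pmf.prob (Qp n \<theta>) {f. t \<le> \<bar>(\<Sum>p\<in>I. if f p then 1 else 0) - (\<Sum>p\<in>I. edge_prob n \<theta> (fst p) (snd p))\<bar>}
     \<le> 2 * exp (- 2 * t\<^sup>2 / real (card I))"
proof -
  have finI: "finite I" using I finite_offdiag finite_subset by blast
  define X where "X p f = (if f p then 1 else 0 :: real)" for p :: "nat \<times> nat" and f
  interpret H: Hoeffding_ineq "measure_pmf (Qp n \<theta>)" I X "\<lambda>_. 0" "\<lambda>_. 1"
    "\<Sum>i\<in>I. measure_pmf.expectation (Qp n \<theta>) (X i)"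
  proof unfold_locales
    show "finite I" by (rule finI)
    have "prob_space.indep_vars (measure_pmf (Qp n \<theta>)) (\<lambda>_. count_space UNIV) (\<lambda>x f. f x) (offdiag n)"
      unfolding Qp_def by (rule indep_vars_Pi_pmf) simp
    then have "prob_space.indep_vars (measure_pmf (Qp n \<theta>)) (\<lambda>_. count_space UNIV) (\<lambda>x f. f x) I"
      using I(1) by (rule prob_space.indep_vars_subset[OF measure_pmf.prob_space_axioms])
    then have "prob_space.indep_vars (measure_pmf (Qp n \<theta>)) (\<lambda>_. borel) (\<lambda>p f. (\<lambda>b. if b then 1 else 0 :: real) (f p)) I"
      by (rule prob_space.indep_vars_compose2[OF measure_pmf.prob_space_axioms]) simp
    moreover have "X = (\<lambda>p f. if f p then 1 else 0)" by (simp add: X_def fun_eq_iff)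
    ultimately show "prob_space.indep_vars (measure_pmf (Qp n \<theta>)) (\<lambda>_. borel) X I"
      by simp
    show "AE x in measure_pmf (Qp n \<theta>). X i x \<in> {0..1}" for i
      by (auto simp: X_def)
  qed
  have Xe: "X p = (\<lambda>f. if f p then 1 else 0)" for p by (simp add: X_def fun_eq_iff)
  have mu: "(\<Sum>i\<in>I. measure_pmf.expectation (Qp n \<theta>) (X i)) = (\<Sum>p\<in>I. edge_prob n \<theta> (fst p) (snd p))"
    using I(1) by (intro sum.cong refl) (auto simp: Xe expect_edge)
  have cI: "(\<Sum>i\<in>I. (1 - 0)\<^sup>2 :: real) = real (card I)" by simp
  have pos: "(\<Sum>i\<in>I. (1 - 0)\<^sup>2 :: real) > 0" using finI I(2) by (simp add: card_gt_0_iff)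
  have "measure_pmf.prob (Qp n \<theta>) {x \<in> space (measure_pmf (Qp n \<theta>)). t \<le> \<bar>(\<Sum>i\<in>I. X i x) - (\<Sum>i\<in>I. measure_pmf.expectation (Qp n \<theta>) (X i))\<bar>}
       \<le> 2 * exp (- 2 * t\<^sup>2 / (\<Sum>i\<in>I. (1 - 0)\<^sup>2))"
    by (rule H.Hoeffding_ineq_abs_ge[OF t pos])
  then show ?thesis unfolding mu cI by (simp add: X_def)
qed

lemma sum_row_pairs: "(\<Sum>p\<in>Pair i ` oth n i. g p) = (\<Sum>k\<in>oth n i. g (i, k))"
  by (subst sum.reindex) (auto simp: inj_on_def)

lemma sum_col_pairs: "(\<Sum>p\<in>(\<lambda>k. (k, j)) ` oth n j. g p) = (\<Sum>k\<in>oth n j. g (k, j))"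
  by (subst sum.reindex) (auto simp: inj_on_def)

lemma row_dev:
  assumes n: "n \<ge> 2" and i: "i < n" and t: "0 \<le> t"
  shows "measure_pmf.prob (Qp n \<theta>) {f. t \<le> \<bar>real (outdeg n (cur f) i) - (\<Sum>k\<in>oth n i. edge_prob n \<theta> i k)\<bar>}
     \<le> 2 * exp (- 2 * t\<^sup>2 / (real n - 1))"
proof -
  define I where "I = Pair i ` oth n i"
  have I: "I \<subseteq> offdiag n" using i by (auto simp: I_def offdiag_def)
  have cI: "card I = n - 1" unfolding I_def using card_oth[OF i] i
    by (subst card_image) (auto simp: inj_on_def)
  have ne: "I \<noteq> {}" using cI n by auto
  have "{f. t \<le> \<bar>real (outdeg n (cur f) i) - (\<Sum>k\<in>oth n i. edge_prob n \<theta> i k)\<bar>}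
     = {f. t \<le> \<bar>(\<Sum>p\<in>I. if f p then 1 else 0) - (\<Sum>p\<in>I. edge_prob n \<theta> (fst p) (snd p))\<bar>}"
    unfolding I_def sum_row_pairs using i by (simp add: outdeg_def sum_card_oth cur_def)
  also have "measure_pmf.prob (Qp n \<theta>) \<dots> \<le> 2 * exp (- 2 * t\<^sup>2 / real (card I))"
    by (rule hoeff_set[OF I ne t])
  finally show ?thesis using cI n by (simp add: of_nat_diff)
qed

lemma col_dev:
  assumes n: "n \<ge> 2" and j: "j < n" and t: "0 \<le> t"
  shows "measure_pmf.prob (Qp n \<theta>) {f. t \<le> \<bar>real (indeg n (cur f) j) - (\<Sum>k\<in>oth n j. edge_prob n \<theta> k j)\<bar>}
     \<le> 2 * exp (- 2 * t\<^sup>2 / (real n - 1))"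
proof -
  define I where "I = (\<lambda>k. (k, j)) ` oth n j"
  have I: "I \<subseteq> offdiag n" using j by (auto simp: I_def offdiag_def)
  have cI: "card I = n - 1" unfolding I_def using card_oth[OF j] j
    by (subst card_image) (auto simp: inj_on_def)
  have ne: "I \<noteq> {}" using cI n by auto
  have "{f. t \<le> \<bar>real (indeg n (cur f) j) - (\<Sum>k\<in>oth n j. edge_prob n \<theta> k j)\<bar>}
     = {f. t \<le> \<bar>(\<Sum>p\<in>I. if f p then 1 else 0) - (\<Sum>p\<in>I. edge_prob n \<theta> (fst p) (snd p))\<bar>}"
    unfolding I_def sum_col_pairs using j by (simp add: indeg_def sum_card_oth cur_def)
  also have "measure_pmf.prob (Qp n \<theta>) \<dots> \<le> 2 * exp (- 2 * t\<^sup>2 / real (card I))"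
    by (rule hoeff_set[OF I ne t])
  finally show ?thesis using cI n by (simp add: of_nat_diff)
qed

definition good :: "nat \<Rightarrow> (nat \<Rightarrow> real) \<Rightarrow> real \<Rightarrow> (nat \<Rightarrow> nat \<Rightarrow> bool) \<Rightarrow> bool" where
  "good n \<theta> t A \<longleftrightarrow>
    (\<forall>i<n. \<bar>real (outdeg n A i) - (\<Sum>k\<in>oth n i. edge_prob n \<theta> i k)\<bar> \<le> t) \<and>
    (\<forall>j<n. \<bar>real (indeg n A j) - (\<Sum>k\<in>oth n j. edge_prob n \<theta> k j)\<bar> \<le> t)"

lemma good_prob:
  assumes n: "n \<ge> 2" and t: "0 \<le> t"
  shows "Prob n \<theta> {A. good n \<theta> t A} \<ge> 1 - 4 * real n * exp (- 2 * t\<^sup>2 / (real n - 1))"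
proof -
  define Q where "Q = Qp n \<theta>"
  define R where "R i = {f. t \<le> \<bar>real (outdeg n (cur f) i) - (\<Sum>k\<in>oth n i. edge_prob n \<theta> i k)\<bar>}" for i
  define C where "C j = {f. t \<le> \<bar>real (indeg n (cur f) j) - (\<Sum>k\<in>oth n j. edge_prob n \<theta> k j)\<bar>}" for j
  define b where "b = 2 * exp (- 2 * t\<^sup>2 / (real n - 1))"
  have bad: "UNIV - {f. good n \<theta> t (cur f)} \<subseteq> (\<Union>i\<in>{..<n}. R i) \<union> (\<Union>j\<in>{..<n}. C j)"
    by (auto simp: good_def R_def C_def)
  have "measure_pmf.prob Q (UNIV - {f. good n \<theta> t (cur f)}) \<le> measure_pmf.prob Q ((\<Union>i\<in>{..<n}. R i) \<union> (\<Union>j\<in>{..<n}. C j))"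
    using bad by (intro measure_pmf.finite_measure_mono) auto
  also have "\<dots> \<le> measure_pmf.prob Q (\<Union>i\<in>{..<n}. R i) + measure_pmf.prob Q (\<Union>j\<in>{..<n}. C j)"
    by (rule measure_Un_le) auto
  also have "measure_pmf.prob Q (\<Union>i\<in>{..<n}. R i) \<le> (\<Sum>i<n. measure_pmf.prob Q (R i))"
    by (rule measure_pmf.finite_measure_subadditive_finite) auto
  also have "\<dots> \<le> (\<Sum>i<n. b)"
    unfolding R_def b_def Q_def by (intro sum_mono row_dev[OF n _ t]) auto
  also have "measure_pmf.prob Q (\<Union>j\<in>{..<n}. C j) \<le> (\<Sum>j<n. measure_pmf.prob Q (C j))"
    by (rule measure_pmf.finite_measure_subadditive_finite) auto
  also have "\<dots> \<le> (\<Sum>j<n. b)"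
    unfolding C_def b_def Q_def by (intro sum_mono col_dev[OF n _ t]) auto
  finally have "measure_pmf.prob Q (UNIV - {f. good n \<theta> t (cur f)}) \<le> 4 * real n * exp (- 2 * t\<^sup>2 / (real n - 1))"
    by (simp add: b_def)
  moreover have "measure_pmf.prob Q (UNIV - {f. good n \<theta> t (cur f)}) = 1 - measure_pmf.prob Q {f. good n \<theta> t (cur f)}"
    using measure_pmf.prob_compl[of "{f. good n \<theta> t (cur f)}" Q] by simp
  ultimately show ?thesis unfolding Prob_eq Q_def by simp
qed

lemma Prob_mono: "E \<subseteq> F \<Longrightarrow> Prob n \<theta> E \<le> Prob n \<theta> F"
  unfolding Prob_eq by (intro measure_pmf.finite_measure_mono) auto

lemma Prob_le1: "Prob n \<theta> E \<le> 1"
  unfolding Prob_eq by simp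




lemma Errf_bound:
  assumes n: "n \<ge> 3" and M: "0 \<le> M" and t: "0 \<le> t"
  shows "Errf n t M \<le> 240 * exp 4 * exp (4 * M) * t / real n"
proof -
  define u where "u = 4 * exp (2 * M + 2)"
  define a where "a = real n"
  have a3: "3 \<le> a" using n by (simp add: a_def)
  have "1 \<le> exp (2 * M + 2)" using M by simp
  then have u1: "1 \<le> u" unfolding u_def by linarith
  have w: "wf M = 1 / u" unfolding wf_def u_def exp_minus by (simp add: field_simps)
  have eps: "mp_eps n t (wf M) = t * u / (a - 1)" unfolding mp_eps_def w a_def by simp
  have eps': "mp_eps n t (1 / u) = t * u / (a - 1)" using eps w by simp
  have S: "mp_S n t (wf M) = t * u + t * u * u / 2"
    unfolding mp_S_def w eps' using a3 u1 by (simp add: a_def field_simps)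
  have E: "Errf n t M = 2 * (t * u) / (a - 1) + (2 * (t * u) + t * u * u) / (a - 2)"
  proof -
    have "2 * mp_S n t (wf M) = 2 * (t * u) + t * u * u" unfolding S by (simp add: algebra_simps)
    then show ?thesis unfolding Errf_def eps a_def[symmetric] by (simp add: add_divide_distrib)
  qed
  have tu: "t * u \<le> t * u * u" using mult_left_mono[of 1 u "t*u"] t u1 by simp
  have tu0: "0 \<le> t * u" using t u1 by simp
  have f1: "x / (a - 1) \<le> 3 * x / a" if "0 \<le> x" for x
  proof -
    have "x / (a - 1) \<le> x / (a / 3)" using that a3 by (intro divide_left_mono) auto
    then show ?thesis by (simp add: mult.commute)
  qed
  have f2: "x / (a - 2) \<le> 3 * x / a" if "0 \<le> x" for x
  proof -
    have "x / (a - 2) \<le> x / (a / 3)" using that a3 by (intro divide_left_mono) auto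
    then show ?thesis by (simp add: mult.commute)
  qed
  have "2 * (t * u) / (a - 1) \<le> 2 * (t * u * u) / (a - 1)"
    using tu a3 by (intro divide_right_mono) auto
  also have "\<dots> \<le> 3 * (2 * (t * u * u)) / a" by (rule f1) (use tu tu0 in simp)
  finally have A1: "2 * (t * u) / (a - 1) \<le> 6 * (t * u * u) / a" by simp
  have "(2 * (t * u) + t * u * u) / (a - 2) \<le> (3 * (t * u * u)) / (a - 2)"
    using tu a3 by (intro divide_right_mono) auto
  also have "\<dots> \<le> 3 * (3 * (t * u * u)) / a" by (rule f2) (use tu tu0 in simp)
  finally have A2: "(2 * (t * u) + t * u * u) / (a - 2) \<le> 9 * (t * u * u) / a" by simp
  have le15: "Errf n t M \<le> 15 * (t * u * u) / a" unfolding E using A1 A2 by (simp add: add_divide_distrib[symmetric])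
  have ee: "exp (2 * M + 2) * exp (2 * M + 2) = exp 4 * exp (4 * M)"
  proof -
    have "exp (2 * M + 2) * exp (2 * M + 2) = exp ((2 * M + 2) + (2 * M + 2))" by (rule exp_add[symmetric])
    also have "(2 * M + 2) + (2 * M + 2) = 4 + 4 * M" by simp
    also have "exp (4 + 4 * M) = exp 4 * exp (4 * M)" by (rule exp_add)
    finally show ?thesis .
  qed
  have "u * u = 16 * exp 4 * exp (4 * M)"
    unfolding u_def using ee by simp
  then have "15 * (t * u * u) / a = 240 * exp 4 * exp (4 * M) * t / real n"
    unfolding a_def by (simp add: mult.assoc)
  with le15 show ?thesis by simp
qed

lemma prob_bound:
  assumes n: "n \<ge> 2"
  shows "4 * real n * exp (- 2 * (sqrt (real n * ln (real n)))\<^sup>2 / (real n - 1)) \<le> 4 / real n"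
proof -
  have n0: "0 < real n" using n by simp
  have n1: "0 < real n - 1" using n by simp
  have l0: "0 \<le> ln (real n)" using n by simp
  have sq: "(sqrt (real n * ln (real n)))\<^sup>2 = real n * ln (real n)"
    using l0 n0 by (intro real_sqrt_pow2) simp
  have "ln (real n) * (real n - 1) \<le> real n * ln (real n)"
    using l0 by (simp add: algebra_simps)
  then have "ln (real n) \<le> real n * ln (real n) / (real n - 1)"
    using n1 by (simp add: pos_le_divide_eq)
  then have le: "- 2 * (real n * ln (real n)) / (real n - 1) \<le> - 2 * ln (real n)"
    by (simp add: divide_simps)
  have e1: "exp (ln (real n)) = real n" using n0 by simp
  have e2: "exp (- 2 * ln (real n)) = 1 / (real n * real n)"
  proof -
    have "exp (- 2 * ln (real n)) = exp (- ln (real n)) * exp (- ln (real n))"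
      by (simp add: exp_add[symmetric])
    also have "exp (- ln (real n)) = 1 / real n" using e1 by (simp add: exp_minus inverse_eq_divide)
    finally show ?thesis by simp
  qed
  have "exp (- 2 * (sqrt (real n * ln (real n)))\<^sup>2 / (real n - 1)) \<le> 1 / (real n * real n)"
    unfolding sq using le e2 by (metis exp_le_cancel_iff)
  then have "4 * real n * exp (- 2 * (sqrt (real n * ln (real n)))\<^sup>2 / (real n - 1)) \<le> 4 * real n * (1 / (real n * real n))"
    using n0 by (intro mult_left_mono) auto
  also have "\<dots> = 4 / real n" using n0 by simp
  finally show ?thesis .
qed

lemma lim_h0: "((\<lambda>x::real. ln x / x powr (2/3)) \<longlongrightarrow> 0) at_top"
  by real_asymp

lemma lim_g: "(\<lambda>n. sqrt (ln (real n) / real n powr (2/3))) \<longlonglongrightarrow> 0"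
proof -
  have "(\<lambda>n. ln (real n) / real n powr (2/3)) \<longlonglongrightarrow> 0"
    using filterlim_compose[OF lim_h0 filterlim_real_sequentially] by (simp add: o_def)
  then have "(\<lambda>n. sqrt (ln (real n) / real n powr (2/3))) \<longlonglongrightarrow> sqrt 0"
    by (rule tendsto_real_sqrt)
  then show ?thesis by simp
qed

lemma powr_third_eq:
  assumes n0: "0 < (x::real)"
  shows "x powr (1/3) * (L / x) = L / x powr (2/3)"
proof -
  have xe: "x = x powr (1/3) * x powr (2/3)"
    using n0 by (simp add: powr_add[symmetric])
  have a: "0 < x powr (1/3)" "0 < x powr (2/3)" using n0 by auto
  have "x powr (1/3) * (L / x) = x powr (1/3) * (L / (x powr (1/3) * x powr (2/3)))"
    using xe by metis
  also have "\<dots> = L / x powr (2/3)" using a by (simp add: field_simps)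
  finally show ?thesis .
qed
lemma expM_bound:
  assumes n: "n \<ge> 2" and tau: "\<tau> < 1/24" and M: "M \<le> \<tau> * ln (real n)"
  shows "exp (4 * M) * (sqrt (ln (real n)) / sqrt (real n)) \<le> sqrt (ln (real n) / real n powr (2/3))"
proof -
  have n0: "0 < real n" using n by simp
  have l0: "0 \<le> ln (real n)" using n by simp
  have "4 * M \<le> 4 * \<tau> * ln (real n)" using M by simp
  also have "\<dots> \<le> (1/6) * ln (real n)" using tau l0 by (intro mult_right_mono) auto
  finally have "exp (4 * M) \<le> exp ((1/6) * ln (real n))" by simp
  also have "\<dots> = real n powr (1/6)" using n0 by (simp add: powr_def)
  also have "\<dots> = sqrt (real n powr (1/3))"
    using n0 by (simp add: powr_half_sqrt[symmetric] powr_powr)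
  finally have e: "exp (4 * M) \<le> sqrt (real n powr (1/3))" .
  have "exp (4 * M) * (sqrt (ln (real n)) / sqrt (real n)) = exp (4 * M) * sqrt (ln (real n) / real n)"
    by (simp add: real_sqrt_divide)
  also have "\<dots> \<le> sqrt (real n powr (1/3)) * sqrt (ln (real n) / real n)"
    using e l0 n0 by (intro mult_right_mono) auto
  also have "\<dots> = sqrt (real n powr (1/3) * (ln (real n) / real n))" by (rule real_sqrt_mult[symmetric])
  also have "real n powr (1/3) * (ln (real n) / real n) = ln (real n) / real n powr (2/3)"
  proof -
    have "real n = real n powr (1/3) * real n powr (2/3)"
      using n0 by (simp add: powr_add[symmetric])
    then show ?thesis using powr_third_eq[OF n0] by simp
  qed
  finally show ?thesis .
qed




lemma tn_div: "n \<ge> 1 \<Longrightarrow> sqrt (real n * ln (real n)) / real n = sqrt (ln (real n)) / sqrt (real n)"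
proof -
  assume n: "n \<ge> 1"
  have s0: "sqrt (real n) \<noteq> 0" using n by simp
  have A: "sqrt (real n * ln (real n)) = sqrt (real n) * sqrt (ln (real n))" by (rule real_sqrt_mult)
  have B: "real n = sqrt (real n) * sqrt (real n)" by simp
  show ?thesis by (metis A B nonzero_mult_divide_mult_cancel_left s0)
qed

lemma main_event:
  fixes \<theta> :: "nat \<Rightarrow> real"
  assumes n: "n \<ge> 3" and Mb: "supnorm n \<theta> \<le> \<tau> * ln (real n)" and tau: "\<tau> < 1/24"
    and small: "240 * exp 4 * sqrt (ln (real n) / real n powr (2/3)) < 1"
  defines "Er \<equiv> Errf n (sqrt (real n * ln (real n))) (supnorm n \<theta>)"
  shows "Prob n \<theta> {A. \<exists>\<theta>h. is_mle n A \<theta>h \<and> supdist n \<theta>h \<theta> \<le> Er} \<ge> 1 - 4 / real n"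
    and "Er \<le> 240 * exp 4 * (sqrt (ln (real n)) * exp (8 * supnorm n \<theta>) / sqrt (real n))"
    and "Er \<le> 240 * exp 4 * sqrt (ln (real n) / real n powr (2/3))"
proof -
  define M where "M = supnorm n \<theta>"
  define t where "t = sqrt (real n * ln (real n))"
  have M0: "0 \<le> M" unfolding M_def using n by (intro supnorm_nonneg) simp
  have t0: "0 \<le> t" unfolding t_def using n by simp
  have Er1: "Er \<le> 240 * exp 4 * exp (4 * M) * t / real n"
    unfolding Er_def M_def[symmetric] t_def[symmetric] by (rule Errf_bound[OF n M0 t0])
  have tt: "t / real n = sqrt (ln (real n)) / sqrt (real n)" unfolding t_def using n by (intro tn_div) simp
  have "240 * exp 4 * exp (4 * M) * t / real n = 240 * exp 4 * (exp (4 * M) * (t / real n))" by simp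
  then have Er2: "Er \<le> 240 * exp 4 * (exp (4 * M) * (sqrt (ln (real n)) / sqrt (real n)))"
    using Er1 unfolding tt by simp
  have ex: "exp (4 * M) * (sqrt (ln (real n)) / sqrt (real n)) \<le> sqrt (ln (real n) / real n powr (2/3))"
    using expM_bound[of n \<tau> M] n tau Mb by (simp add: M_def)
  show Er3: "Er \<le> 240 * exp 4 * sqrt (ln (real n) / real n powr (2/3))"
    using Er2 ex by (meson exp_gt_zero mult_left_mono order_trans less_imp_le mult_pos_pos zero_less_numeral)
  have "exp (4 * M) \<le> exp (8 * M)" using M0 by simp
  moreover have "0 \<le> sqrt (ln (real n)) / sqrt (real n)" using n by simp
  ultimately have "exp (4 * M) * (sqrt (ln (real n)) / sqrt (real n)) \<le> exp (8 * M) * (sqrt (ln (real n)) / sqrt (real n))"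
    by (intro mult_right_mono) auto
  then show "Er \<le> 240 * exp 4 * (sqrt (ln (real n)) * exp (8 * supnorm n \<theta>) / sqrt (real n))"
    using Er2 unfolding M_def[symmetric]
    by (smt (verit, best) exp_gt_zero mult_left_mono mult.commute times_divide_eq_right)
  have Er_small: "Er < 1" using Er3 small by linarith
  have sub: "{A. good n \<theta> t A} \<subseteq> {A. \<exists>\<theta>h. is_mle n A \<theta>h \<and> supdist n \<theta>h \<theta> \<le> Er}"
  proof
    fix A assume "A \<in> {A. good n \<theta> t A}"
    then have g: "good n \<theta> t A" by simp
    have "\<exists>\<theta>h. is_mle n A \<theta>h \<and> supdist n \<theta>h \<theta> \<le> Errf n t (supnorm n \<theta>)"
      by (rule det_exist[OF n t0]) (use g Er_small in \<open>auto simp: good_def Er_def t_def\<close>)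
    then show "A \<in> {A. \<exists>\<theta>h. is_mle n A \<theta>h \<and> supdist n \<theta>h \<theta> \<le> Er}" by (simp add: Er_def t_def)
  qed
  have "1 - 4 / real n \<le> 1 - 4 * real n * exp (- 2 * t\<^sup>2 / (real n - 1))"
    using prob_bound[of n] n by (simp add: t_def)
  also have "\<dots> \<le> Prob n \<theta> {A. good n \<theta> t A}" using good_prob[of n t \<theta>] n t0 by simp
  also have "\<dots> \<le> Prob n \<theta> {A. \<exists>\<theta>h. is_mle n A \<theta>h \<and> supdist n \<theta>h \<theta> \<le> Er}" by (rule Prob_mono[OF sub])
  finally show "Prob n \<theta> {A. \<exists>\<theta>h. is_mle n A \<theta>h \<and> supdist n \<theta>h \<theta> \<le> Er} \<ge> 1 - 4 / real n" .
qed

lemma lim_4n: "(\<lambda>n. 4 / real n) \<longlonglongrightarrow> 0"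
  by real_asymp

theorem theorem1:
  fixes \<tau> :: real and \<theta>s :: "nat \<Rightarrow> nat \<Rightarrow> real"
  assumes "0 < \<tau>" and "\<tau> < 1/24"
    and "\<forall>n\<ge>2. supnorm n (\<theta>s n) \<le> \<tau> * ln (real n)"
  shows "((\<lambda>n. Prob n (\<theta>s n) {A. mle_exists n A}) \<longlonglongrightarrow> 1) \<and>
    (\<forall>\<epsilon>>0. \<exists>C>0. \<forall>\<^sub>F n in sequentially.
           Prob n (\<theta>s n) {A. \<exists>\<theta>h. is_mle n A \<theta>h \<and>
              supdist n \<theta>h (\<theta>s n)
                \<le> C * (sqrt (ln (real n)) * exp (8 * supnorm n (\<theta>s n)) / sqrt (real n))}
           \<ge> 1 - \<epsilon>) \<and>
    (\<forall>\<epsilon>>0. \<forall>\<delta>>0. \<forall>\<^sub>F n in sequentially.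
           Prob n (\<theta>s n) {A. \<exists>\<theta>h. is_mle n A \<theta>h \<and> supdist n \<theta>h (\<theta>s n) \<le> \<delta>}
           \<ge> 1 - \<epsilon>) \<and>
    (\<forall>n\<ge>2. \<forall>A \<theta>1 \<theta>2. is_mle n A \<theta>1 \<and> is_mle n A \<theta>2 \<longrightarrow>
           (\<forall>k<2*n-1. \<theta>1 k = \<theta>2 k))"
proof -
  define K :: real where "K = 240 * exp 4"
  define g where "g n = sqrt (ln (real n) / real n powr (2/3))" for n :: nat
  define Er where "Er n = Errf n (sqrt (real n * ln (real n))) (supnorm n (\<theta>s n))" for n
  have K0: "0 < K" by (simp add: K_def)
  have Kg: "(\<lambda>n. K * g n) \<longlonglongrightarrow> 0"
    using tendsto_mult_right_zero[OF lim_g, of K] by (simp add: g_def)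
  have ev_small: "\<forall>\<^sub>F n in sequentially. K * g n < c" if "c > 0" for c
    using order_tendstoD(2)[OF Kg that] .
  have ev_4n: "\<forall>\<^sub>F n in sequentially. 4 / real n < c" if "c > 0" for c
    using order_tendstoD(2)[OF lim_4n that] .
  have ev3: "\<forall>\<^sub>F n in sequentially. n \<ge> 3" by (rule eventually_ge_at_top)
  have key: "Prob n (\<theta>s n) {A. \<exists>\<theta>h. is_mle n A \<theta>h \<and> supdist n \<theta>h (\<theta>s n) \<le> Er n} \<ge> 1 - 4 / real n
      \<and> Er n \<le> K * (sqrt (ln (real n)) * exp (8 * supnorm n (\<theta>s n)) / sqrt (real n))
      \<and> Er n \<le> K * g n"
    if "n \<ge> 3" "K * g n < 1" for n
  proof -
    have Mb: "supnorm n (\<theta>s n) \<le> \<tau> * ln (real n)" using assms(3) that by simp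
    have sm: "240 * exp 4 * sqrt (ln (real n) / real n powr (2/3)) < 1" using that by (simp add: K_def g_def)
    show ?thesis using main_event[OF that(1) Mb assms(2) sm] by (simp add: Er_def K_def g_def)
  qed
  have ev_key: "\<forall>\<^sub>F n in sequentially. Prob n (\<theta>s n) {A. \<exists>\<theta>h. is_mle n A \<theta>h \<and> supdist n \<theta>h (\<theta>s n) \<le> Er n} \<ge> 1 - 4 / real n
      \<and> Er n \<le> K * (sqrt (ln (real n)) * exp (8 * supnorm n (\<theta>s n)) / sqrt (real n))
      \<and> Er n \<le> K * g n"
    using ev3 ev_small[OF zero_less_one] by eventually_elim (use key in auto)
  have P1: "(\<lambda>n. Prob n (\<theta>s n) {A. mle_exists n A}) \<longlonglongrightarrow> 1"
  proof (rule tendsto_sandwich)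
    show "\<forall>\<^sub>F n in sequentially. 1 - 4 / real n \<le> Prob n (\<theta>s n) {A. mle_exists n A}"
      using ev_key
    proof eventually_elim
      case (elim n)
      have "{A. \<exists>\<theta>h. is_mle n A \<theta>h \<and> supdist n \<theta>h (\<theta>s n) \<le> Er n} \<subseteq> {A. mle_exists n A}"
        by (auto simp: mle_exists_def)
      then show ?case using elim Prob_mono by (meson order_trans)
    qed
    show "\<forall>\<^sub>F n in sequentially. Prob n (\<theta>s n) {A. mle_exists n A} \<le> 1"
      by (simp add: Prob_le1)
    show "(\<lambda>n. 1 - 4 / real n) \<longlonglongrightarrow> 1"
      using tendsto_diff[OF tendsto_const lim_4n, of 1] by simp
    show "(\<lambda>n. 1::real) \<longlonglongrightarrow> 1" by simp
  qed
  have P2: "\<forall>\<epsilon>>0. \<exists>C>0. \<forall>\<^sub>F n in sequentially.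
           Prob n (\<theta>s n) {A. \<exists>\<theta>h. is_mle n A \<theta>h \<and>
              supdist n \<theta>h (\<theta>s n)
                \<le> C * (sqrt (ln (real n)) * exp (8 * supnorm n (\<theta>s n)) / sqrt (real n))}
           \<ge> 1 - \<epsilon>"
  proof (intro allI impI exI[of _ K] conjI K0)
    fix \<epsilon> :: real assume e: "\<epsilon> > 0"
    show "\<forall>\<^sub>F n in sequentially.
           Prob n (\<theta>s n) {A. \<exists>\<theta>h. is_mle n A \<theta>h \<and>
              supdist n \<theta>h (\<theta>s n)
                \<le> K * (sqrt (ln (real n)) * exp (8 * supnorm n (\<theta>s n)) / sqrt (real n))}
           \<ge> 1 - \<epsilon>"
      using ev_key ev_4n[OF e]
    proof eventually_elim
      case (elim n)
      have "{A. \<exists>\<theta>h. is_mle n A \<theta>h \<and> supdist n \<theta>h (\<theta>s n) \<le> Er n}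
         \<subseteq> {A. \<exists>\<theta>h. is_mle n A \<theta>h \<and> supdist n \<theta>h (\<theta>s n)
                \<le> K * (sqrt (ln (real n)) * exp (8 * supnorm n (\<theta>s n)) / sqrt (real n))}"
        using elim by (auto intro: order_trans)
      then have "Prob n (\<theta>s n) {A. \<exists>\<theta>h. is_mle n A \<theta>h \<and> supdist n \<theta>h (\<theta>s n) \<le> Er n}
          \<le> Prob n (\<theta>s n) {A. \<exists>\<theta>h. is_mle n A \<theta>h \<and> supdist n \<theta>h (\<theta>s n)
                \<le> K * (sqrt (ln (real n)) * exp (8 * supnorm n (\<theta>s n)) / sqrt (real n))}"
        by (rule Prob_mono)
      then show ?case using elim by linarith
    qed
  qed
  have P3: "\<forall>\<epsilon>>0. \<forall>\<delta>>0. \<forall>\<^sub>F n in sequentially.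
           Prob n (\<theta>s n) {A. \<exists>\<theta>h. is_mle n A \<theta>h \<and> supdist n \<theta>h (\<theta>s n) \<le> \<delta>}
           \<ge> 1 - \<epsilon>"
  proof (intro allI impI)
    fix \<epsilon> \<delta> :: real assume e: "\<epsilon> > 0" and d: "\<delta> > 0"
    show "\<forall>\<^sub>F n in sequentially.
           Prob n (\<theta>s n) {A. \<exists>\<theta>h. is_mle n A \<theta>h \<and> supdist n \<theta>h (\<theta>s n) \<le> \<delta>} \<ge> 1 - \<epsilon>"
      using ev_key ev_4n[OF e] ev_small[OF d]
    proof eventually_elim
      case (elim n)
      have "{A. \<exists>\<theta>h. is_mle n A \<theta>h \<and> supdist n \<theta>h (\<theta>s n) \<le> Er n}
         \<subseteq> {A. \<exists>\<theta>h. is_mle n A \<theta>h \<and> supdist n \<theta>h (\<theta>s n) \<le> \<delta>}"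
        using elim by auto
      then have "Prob n (\<theta>s n) {A. \<exists>\<theta>h. is_mle n A \<theta>h \<and> supdist n \<theta>h (\<theta>s n) \<le> Er n}
          \<le> Prob n (\<theta>s n) {A. \<exists>\<theta>h. is_mle n A \<theta>h \<and> supdist n \<theta>h (\<theta>s n) \<le> \<delta>}"
        by (rule Prob_mono)
      then show ?case using elim by linarith
    qed
  qed
  have P4: "\<forall>n\<ge>2. \<forall>A \<theta>1 \<theta>2. is_mle n A \<theta>1 \<and> is_mle n A \<theta>2 \<longrightarrow> (\<forall>k<2*n-1. \<theta>1 k = \<theta>2 k)"
    using mle_unique by blast
  show ?thesis using P1 P2 P3 P4 by blast
qed


end
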